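(* Let $(g,dh,\mathbb{T}^2\setminus\{E_1,E_2\})$ be the Weierstrass data of a periodic genus-one helicoid. Then there is a non-trivial biholomorphic involution $I$ of $\mathbb{T}^2$ with $I(E_1)=E_2$. Moreover, $I^*dh=-dh$ and $I^*\frac{dg}{g}=-\frac{dg}{g}$.
   Context: A periodic genus-one helicoid is (after a homothety) given by Weierstrass data $(g,dh,\mathbb{T}^2\setminus\{E_1,E_2\})$, where $\mathbb{T}^2$ is a conformal torus and $E_1\neq E_2$ are points of it, such that: $g$ extends meromorphically to $\mathbb{T}^2$ with a zero at $E_1$ and a pole at $E_2$; $dh$ extends meromorphically to $\mathbb{T}^2$ with simple poles at $E_1,E_2$, with residue $-i$ at $E_1$ and $i$ at $E_2$; on $\mathbb{T}^2\setminus\{E_1,E_2\}$, $dh$ is holomorphic, $g\,dh$ and $g^{-1}dh$ are holomorphic and do not vanish simultaneously, and the period conditions $\int_\gamma g\,dh=\overline{\int_\gamma g^{-1}dh}$, $\mathrm{Re}\int_\gamma dh=0$ hold for all closed curves except that the vertical periods around $E_1,E_2$ need not vanish. The surface $\mathrm{Re}\int\left(\tfrac12(g^{-1}-g),\tfrac{i}{2}(g^{-1}+g),1\right)dh$ is then invariant under a screw motion and is required to be asymptotic to a helicoid; in this normalization this is equivalent to the one-form $\frac{dg}{g}-i\,dh$ having no poles at $E_1,E_2$. *)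

theory Defs
  imports "HOL-Complex_Analysis.Complex_Analysis"
begin

text \<open>The lattice generated by w1, w2; the conformal torus is the quotient of the
  complex plane by it (when w1, w2 are R-linearly independent).\<close>
definition lattice :: "complex \<Rightarrow> complex \<Rightarrow> complex set" where
  "lattice w1 w2 = {of_int m * w1 + of_int n * w2 | m n. True}"

definition lattice_gens :: "complex \<Rightarrow> complex \<Rightarrow> bool" where
  "lattice_gens w1 w2 \<longleftrightarrow> Im (w2 * cnj w1) \<noteq> 0"

definition lifted_points :: "complex \<Rightarrow> complex \<Rightarrow> complex set \<Rightarrow> complex set" where
  "lifted_points w1 w2 E = {e + l | e l. e \<in> E \<and> l \<in> lattice w1 w2}"

text \<open>A closed curve on the torus avoiding the punctures, given by a lift to the plane.\<close>
definition torus_closed_curve :: "complex \<Rightarrow> complex \<Rightarrow> complex set \<Rightarrow> (real \<Rightarrow> complex) \<Rightarrow> bool" where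
  "torus_closed_curve w1 w2 P \<gamma> \<longleftrightarrow> valid_path \<gamma> \<and> path_image \<gamma> \<inter> P = {} \<and>
      pathfinish \<gamma> - pathstart \<gamma> \<in> lattice w1 w2"

end

theory Submission
  imports Defs
begin


lemma lattice_zero: "0 \<in> lattice u v"
  unfolding lattice_def by (rule CollectI, rule exI[of _ 0], rule exI[of _ 0]) simp

lemma lattice_gen1: "u \<in> lattice u v"
  unfolding lattice_def by (rule CollectI, rule exI[of _ 1], rule exI[of _ 0]) simp

lemma lattice_gen2: "v \<in> lattice u v"
  unfolding lattice_def by (rule CollectI, rule exI[of _ 0], rule exI[of _ 1]) simp

lemma lattice_add: "a \<in> lattice u v \<Longrightarrow> b \<in> lattice u v \<Longrightarrow> a + b \<in> lattice u v"
proof -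
  assume "a \<in> lattice u v" "b \<in> lattice u v"
  then obtain m n m' n' where "a = of_int m * u + of_int n * v" "b = of_int m' * u + of_int n' * v"
    unfolding lattice_def by blast
  hence "a + b = of_int (m+m') * u + of_int (n+n') * v" by (simp add: algebra_simps)
  thus ?thesis unfolding lattice_def by blast
qed

lemma lattice_uminus: "a \<in> lattice u v \<Longrightarrow> - a \<in> lattice u v"
proof -
  assume "a \<in> lattice u v"
  then obtain m n where "a = of_int m * u + of_int n * v"
    unfolding lattice_def by blast
  hence "- a = of_int (-m) * u + of_int (-n) * v" by (simp add: algebra_simps)
  thus ?thesis unfolding lattice_def by blast
qed

lemma lattice_diff: "a \<in> lattice u v \<Longrightarrow> b \<in> lattice u v \<Longrightarrow> a - b \<in> lattice u v"
  using lattice_add[of a u v "-b"] lattice_uminus[of b u v] by simp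

lemma lattice_diff_commute: "a - b \<in> lattice u v \<longleftrightarrow> b - a \<in> lattice u v"
  using lattice_uminus[of "a-b" u v] lattice_uminus[of "b-a" u v] by auto

lemma lattice_swap: "lattice u v = lattice v u"
  unfolding lattice_def by (auto simp: add.commute) (metis add.commute)+

lemma lattice_int_comb: "of_int m * u + of_int n * v \<in> lattice u v"
  unfolding lattice_def by blast

lemma per_int:
  assumes "\<forall>z. f (z + u) = f z"
  shows "f (z + of_int m * u) = f z"
proof (induction m arbitrary: z rule: int_induct[where k=0])
  case base thus ?case by simp
next
  case (step1 i z)
  have "f (z + of_int (i+1) * u) = f ((z + of_int i * u) + u)" by (simp add: algebra_simps)
  also have "\<dots> = f (z + of_int i * u)" using assms by simp
  finally show ?case using step1 by simp
next
  case (step2 i z)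
  have "f (z + of_int i * u) = f ((z + of_int (i - 1) * u) + u)" by (simp add: algebra_simps)
  also have "\<dots> = f (z + of_int (i - 1) * u)" using assms by simp
  finally show ?case using step2 by simp
qed

lemma periodic_lattice:
  assumes "\<forall>z. f (z + u) = f z \<and> f (z + v) = f z" "l \<in> lattice u v"
  shows "f (z + l) = f z"
proof -
  obtain m n where l: "l = of_int m * u + of_int n * v" using assms(2) unfolding lattice_def by blast
  have "f (z + l) = f ((z + of_int n * v) + of_int m * u)" by (simp add: l algebra_simps)
  also have "\<dots> = f (z + of_int n * v)" by (rule per_int) (use assms in auto)
  also have "\<dots> = f z" by (rule per_int) (use assms in auto)
  finally show ?thesis .
qed

definition cs :: "complex \<Rightarrow> complex \<Rightarrow> complex \<Rightarrow> real" where
  "cs u v z = Im (z * cnj v) / Im (u * cnj v)"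
definition ct :: "complex \<Rightarrow> complex \<Rightarrow> complex \<Rightarrow> real" where
  "ct u v z = Im (z * cnj u) / Im (v * cnj u)"

lemma coord:
  assumes "Im (v * cnj u) \<noteq> 0"
  shows "z = of_real (cs u v z) * u + of_real (ct u v z) * v"
proof -
  define D where "D = Re u * Im v - Im u * Re v"
  have D: "D \<noteq> 0" using assms by (simp add: D_def algebra_simps)
  have e1: "Im (u * cnj v) = - D" "Im (v * cnj u) = D" by (simp_all add: D_def algebra_simps)
  have c1: "cs u v z = (Re z * Im v - Im z * Re v) / D" unfolding cs_def e1 by (simp add: divide_simps)
  have c2: "ct u v z = (Im z * Re u - Re z * Im u) / D" unfolding ct_def e1 by (simp add: algebra_simps)
  have r: "Re z = (Re z * Im v - Im z * Re v) / D * Re u + (Im z * Re u - Re z * Im u) / D * Re v"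
  proof -
    have "(Re z * Im v - Im z * Re v) * Re u + (Im z * Re u - Re z * Im u) * Re v = Re z * D"
      by (simp add: D_def algebra_simps)
    thus ?thesis using D by (simp add: field_simps)
  qed
  have i: "Im z = (Re z * Im v - Im z * Re v) / D * Im u + (Im z * Re u - Re z * Im u) / D * Im v"
  proof -
    have "(Re z * Im v - Im z * Re v) * Im u + (Im z * Re u - Re z * Im u) * Im v = Im z * D"
      by (simp add: D_def algebra_simps)
    thus ?thesis using D by (simp add: field_simps)
  qed
  show ?thesis unfolding c1 c2 using r i by (simp add: complex_eq_iff)
qed


lemma reduce_cell:
  assumes "Im (v * cnj u) \<noteq> 0"
  obtains l s t where "l \<in> lattice u v" "0 \<le> s" "s < 1" "0 \<le> t" "t < 1"
    "z = l + of_real s * u + of_real t * v"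
proof -
  define a where "a = cs u v z"
  define b where "b = ct u v z"
  have z: "z = of_real a * u + of_real b * v" using coord[OF assms] by (simp add: a_def b_def)
  define l where "l = of_int \<lfloor>a\<rfloor> * u + of_int \<lfloor>b\<rfloor> * v"
  have "z = l + of_real (a - of_int \<lfloor>a\<rfloor>) * u + of_real (b - of_int \<lfloor>b\<rfloor>) * v"
    unfolding z l_def by (simp add: algebra_simps)
  moreover have "l \<in> lattice u v" unfolding l_def by (rule lattice_int_comb)
  ultimately show ?thesis using that[of l "a - of_int \<lfloor>a\<rfloor>" "b - of_int \<lfloor>b\<rfloor>"]
    by (simp add: floor_le_iff) linarith
qed

definition cell :: "complex \<Rightarrow> complex \<Rightarrow> complex set" where
  "cell u v = (\<lambda>(s,t). of_real s * u + of_real t * v) ` ({0..1} \<times> {0..1})"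

lemma compact_cell: "compact (cell u v)"
  unfolding cell_def
  by (intro compact_continuous_image compact_Times compact_Icc)
     (auto intro!: continuous_intros simp: case_prod_unfold)

lemma elliptic_const:
  assumes "Im (v * cnj u) \<noteq> 0" "f holomorphic_on UNIV" "\<forall>z. f (z + u) = f z \<and> f (z + v) = f z"
  shows "f constant_on UNIV"
proof (rule Liouville_theorem[OF assms(2)])
  have "range f \<subseteq> f ` cell u v"
  proof
    fix y assume "y \<in> range f"
    then obtain z where y: "y = f z" by auto
    obtain l s t where lst: "l \<in> lattice u v" "0 \<le> s" "s < 1" "0 \<le> t" "t < 1"
      "z = l + of_real s * u + of_real t * v" using reduce_cell[OF assms(1)] by metis
    have "f z = f ((of_real s * u + of_real t * v) + l)" using lst by (simp add: algebra_simps)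
    also have "\<dots> = f (of_real s * u + of_real t * v)" by (rule periodic_lattice) (use assms lst in auto)
    finally have "y = f (of_real s * u + of_real t * v)" using y by simp
    moreover have "of_real s * u + of_real t * v \<in> cell u v" unfolding cell_def using lst
      by (intro image_eqI[of _ _ "(s,t)"]) auto
    ultimately show "y \<in> f ` cell u v" by blast
  qed
  moreover have "compact (f ` cell u v)"
    by (intro compact_continuous_image compact_cell holomorphic_on_imp_continuous_on
          holomorphic_on_subset[OF assms(2)]) auto
  ultimately show "bounded (range f)" using compact_imp_bounded bounded_subset by blast
qed



lemma cs_lin:
  assumes "Im (v * cnj u) \<noteq> 0"
  shows "cs u v (of_real s * u + of_real t * v) = s" "ct u v (of_real s * u + of_real t * v) = t"
proof -
  have e: "Im (u * cnj v) = - Im (v * cnj u)" by simp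
  have "Im ((of_real s * u + of_real t * v) * cnj v) = s * Im (u * cnj v)"
    by (simp add: algebra_simps)
  thus "cs u v (of_real s * u + of_real t * v) = s" using assms unfolding cs_def e by simp
  have "Im ((of_real s * u + of_real t * v) * cnj u) = t * Im (v * cnj u)"
    by (simp add: algebra_simps)
  thus "ct u v (of_real s * u + of_real t * v) = t" using assms unfolding ct_def by simp
qed

lemma cs_linear: "cs u v (of_real a * x + of_real b * y) = a * cs u v x + b * cs u v y"
  "ct u v (of_real a * x + of_real b * y) = a * ct u v x + b * ct u v y"
proof -
  have "Im ((of_real a * x + of_real b * y) * cnj v) = a * Im (x * cnj v) + b * Im (y * cnj v)"
    by (simp add: algebra_simps)
  thus "cs u v (of_real a * x + of_real b * y) = a * cs u v x + b * cs u v y"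
    unfolding cs_def by (simp add: add_divide_distrib)
  have "Im ((of_real a * x + of_real b * y) * cnj u) = a * Im (x * cnj u) + b * Im (y * cnj u)"
    by (simp add: algebra_simps)
  thus "ct u v (of_real a * x + of_real b * y) = a * ct u v x + b * ct u v y"
    unfolding ct_def by (simp add: add_divide_distrib)
qed

lemma contour_integral_linepath_translate:
  "contour_integral (linepath (a + c) (b + c)) f = contour_integral (linepath a b) (\<lambda>z. f (z + c))"
proof -
  have "\<And>x. linepath (a + c) (b + c) x = linepath a b x + c"
    by (simp add: linepath_def algebra_simps)
  thus ?thesis unfolding contour_integral_integral by simp
qed

lemma deriv_periodic:
  assumes "\<forall>z. f (z + c) = f z"
  shows "deriv f (z + c) = deriv f z"
proof -
  have "deriv f (z + c) = deriv (f \<circ> (\<lambda>x. z + c + x)) 0" by (rule deriv_shift_0)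
  also have "f \<circ> (\<lambda>x. z + c + x) = f \<circ> (\<lambda>x. z + x)"
  proof
    fix x show "(f \<circ> (\<lambda>x. z + c + x)) x = (f \<circ> (\<lambda>x. z + x)) x"
      using assms[rule_format, of "z + x"] by (simp add: algebra_simps)
  qed
  also have "deriv \<dots> 0 = deriv f z" by (rule deriv_shift_0[symmetric])
  finally show ?thesis .
qed

lemma seg_char:
  assumes "Im (v * cnj u) \<noteq> 0"
    and "p \<in> closed_segment (z0 + of_real s1 * u + of_real t1 * v) (z0 + of_real s2 * u + of_real t2 * v)"
  shows "\<exists>x\<in>{0..1}. cs u v (p - z0) = (1 - x) * s1 + x * s2 \<and> ct u v (p - z0) = (1 - x) * t1 + x * t2"
proof -
  obtain x where x: "x \<in> {0..1}"
    "p = (1 - x) *\<^sub>R (z0 + of_real s1 * u + of_real t1 * v) + x *\<^sub>R (z0 + of_real s2 * u + of_real t2 * v)"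
    using assms(2) unfolding closed_segment_def by auto
  have "p - z0 = of_real ((1 - x) * s1 + x * s2) * u + of_real ((1 - x) * t1 + x * t2) * v"
    unfolding x(2) by (simp add: scaleR_conv_of_real algebra_simps)
  hence "cs u v (p - z0) = (1 - x) * s1 + x * s2 \<and> ct u v (p - z0) = (1 - x) * t1 + x * t2"
    using cs_lin[OF assms(1)] by metis
  thus ?thesis using x(1) by blast
qed


lemma not_on_seg:
  assumes "Im (v * cnj u) \<noteq> 0" "0 < cs u v (p - z0)" "cs u v (p - z0) < 1"
    "0 < ct u v (p - z0)" "ct u v (p - z0) < 1"
  shows "p \<notin> closed_segment z0 (z0 + u)" "p \<notin> closed_segment (z0 + u) (z0 + u + v)"
        "p \<notin> closed_segment (z0 + u + v) (z0 + v)" "p \<notin> closed_segment (z0 + v) z0"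
proof -
  show "p \<notin> closed_segment z0 (z0 + u)"
    using seg_char[OF assms(1), of p z0 0 0 1 0] assms by auto
  show "p \<notin> closed_segment (z0 + u) (z0 + u + v)"
    using seg_char[OF assms(1), of p z0 1 0 1 1] assms by auto
  show "p \<notin> closed_segment (z0 + u + v) (z0 + v)"
    using seg_char[OF assms(1), of p z0 1 1 0 1] assms by auto
  show "p \<notin> closed_segment (z0 + v) z0"
    using seg_char[OF assms(1), of p z0 0 1 0 0] assms by auto
qed

lemma wind_cell:
  assumes D: "Im (v * cnj u) > 0" and p: "0 < cs u v (p - z0)" "cs u v (p - z0) < 1"
    "0 < ct u v (p - z0)" "ct u v (p - z0) < 1"
  shows "winding_number (linepath z0 (z0 + u) +++ linepath (z0 + u) (z0 + u + v) +++
           linepath (z0 + u + v) (z0 + v) +++ linepath (z0 + v) z0) p = 1"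
proof -
  have D0: "Im (v * cnj u) \<noteq> 0" using D by simp
  define s where "s = cs u v (p - z0)"
  define t where "t = ct u v (p - z0)"
  have pe: "p = z0 + of_real s * u + of_real t * v"
    using coord[OF D0, of "p - z0"] by (simp add: s_def t_def algebra_simps)
  note ns = not_on_seg[OF D0 p]
  have w1: "0 < Re (winding_number (linepath z0 (z0 + u)) p)"
  proof (rule winding_number_linepath_pos_lt)
    have "Im ((z0 + u - z0) * cnj (z0 + u - p)) = t * Im (v * cnj u)"
      unfolding pe by (simp add: algebra_simps)
    thus "0 < Im ((z0 + u - z0) * cnj (z0 + u - p))" using D p by (simp add: t_def)
  qed
  have w2: "0 < Re (winding_number (linepath (z0 + u) (z0 + u + v)) p)"
  proof (rule winding_number_linepath_pos_lt)
    have "Im ((z0 + u + v - (z0 + u)) * cnj (z0 + u + v - p)) = (1 - s) * Im (v * cnj u)"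
      unfolding pe by (simp add: algebra_simps)
    thus "0 < Im ((z0 + u + v - (z0 + u)) * cnj (z0 + u + v - p))" using D p by (simp add: s_def)
  qed
  have w3: "0 < Re (winding_number (linepath (z0 + u + v) (z0 + v)) p)"
  proof (rule winding_number_linepath_pos_lt)
    have "Im ((z0 + v - (z0 + u + v)) * cnj (z0 + v - p)) = (1 - t) * Im (v * cnj u)"
      unfolding pe by (simp add: algebra_simps)
    thus "0 < Im ((z0 + v - (z0 + u + v)) * cnj (z0 + v - p))" using D p by (simp add: t_def)
  qed
  have w4: "0 < Re (winding_number (linepath (z0 + v) z0) p)"
  proof (rule winding_number_linepath_pos_lt)
    have "Im ((z0 - (z0 + v)) * cnj (z0 - p)) = s * Im (v * cnj u)"
      unfolding pe by (simp add: algebra_simps)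
    thus "0 < Im ((z0 - (z0 + v)) * cnj (z0 - p))" using D p by (simp add: s_def)
  qed
  have h1: "\<bar>Re (winding_number (linepath z0 (z0 + u)) p)\<bar> < 1/2"
    by (rule winding_number_lt_half_linepath) (use ns in auto)
  have h2: "\<bar>Re (winding_number (linepath (z0 + u) (z0 + u + v)) p)\<bar> < 1/2"
    by (rule winding_number_lt_half_linepath) (use ns in auto)
  have h3: "\<bar>Re (winding_number (linepath (z0 + u + v) (z0 + v)) p)\<bar> < 1/2"
    by (rule winding_number_lt_half_linepath) (use ns in auto)
  have h4: "\<bar>Re (winding_number (linepath (z0 + v) z0) p)\<bar> < 1/2"
    by (rule winding_number_lt_half_linepath) (use ns in auto)
  let ?g = "linepath z0 (z0 + u) +++ linepath (z0 + u) (z0 + u + v) +++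
           linepath (z0 + u + v) (z0 + v) +++ linepath (z0 + v) z0"
  have wsum: "winding_number ?g p = winding_number (linepath z0 (z0 + u)) p +
      (winding_number (linepath (z0 + u) (z0 + u + v)) p +
      (winding_number (linepath (z0 + u + v) (z0 + v)) p + winding_number (linepath (z0 + v) z0) p))"
    using ns by (simp add: winding_number_join path_image_join)
  show ?thesis
  proof (rule winding_number_eq_1)
    show "valid_path ?g" by (simp add: valid_path_join)
    show "p \<notin> path_image ?g" using ns by (simp add: path_image_join)
    show "pathfinish ?g = pathstart ?g" by simp
    show "0 < Re (winding_number ?g p)" using w1 w2 w3 w4 unfolding wsum by simp
    show "Re (winding_number ?g p) < 2" using h1 h2 h3 h4 unfolding wsum by simp
  qed
qed



lemma Kc_norm:
  assumes D0: "Im (v * cnj u) \<noteq> 0"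
    and st: "0 \<le> cs u v (p - z0)" "cs u v (p - z0) \<le> 1" "0 \<le> ct u v (p - z0)" "ct u v (p - z0) \<le> 1"
  shows "norm p \<le> norm z0 + norm u + norm v"
proof -
  define a where "a = cs u v (p - z0)"
  define b where "b = ct u v (p - z0)"
  have pe: "p = z0 + of_real a * u + of_real b * v"
    using coord[OF D0, of "p - z0"] by (simp add: a_def b_def algebra_simps)
  have "norm p \<le> norm z0 + norm (of_real a * u) + norm (of_real b * v)"
    unfolding pe using norm_triangle_ineq order.trans add_right_mono by metis
  also have "norm (of_real a * u) \<le> norm u"
    using st unfolding a_def by (simp add: norm_mult mult_left_le_one_le)
  also have "norm (of_real b * v) \<le> norm v"
    using st unfolding b_def by (simp add: norm_mult mult_left_le_one_le)
  finally show ?thesis by simp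
qed


lemma Kc_convex:
  "convex {p. 0 \<le> cs u v (p - z0) \<and> cs u v (p - z0) \<le> 1 \<and> 0 \<le> ct u v (p - z0) \<and> ct u v (p - z0) \<le> 1}"
  (is "convex ?K")
  unfolding convex_def
proof (intro ballI allI impI)
  fix x y and a b :: real assume xy: "x \<in> ?K" "y \<in> ?K" and ab: "0 \<le> a" "0 \<le> b" "a + b = 1"
  have e: "a *\<^sub>R x + b *\<^sub>R y - z0 = of_real a * (x - z0) + of_real b * (y - z0)"
  proof -
    have ab': "of_real a + of_real b = (1::complex)" using ab(3) by (metis of_real_1 of_real_add)
    have "z0 = of_real a * z0 + of_real b * z0" using ab' by (metis distrib_right mult_1)
    thus ?thesis by (simp add: scaleR_conv_of_real algebra_simps)
  qed
  have c1: "cs u v (a *\<^sub>R x + b *\<^sub>R y - z0) = a * cs u v (x - z0) + b * cs u v (y - z0)"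
    unfolding e by (rule cs_linear)
  have c2: "ct u v (a *\<^sub>R x + b *\<^sub>R y - z0) = a * ct u v (x - z0) + b * ct u v (y - z0)"
    unfolding e by (rule cs_linear)
  have cvx: "0 \<le> a * p + b * q \<and> a * p + b * q \<le> 1" if "0 \<le> p" "p \<le> 1" "0 \<le> q" "q \<le> 1" for p q :: real
  proof -
    have "a * p \<le> a" "b * q \<le> b" using that ab by (simp_all add: mult_left_le)
    moreover have "0 \<le> a * p" "0 \<le> b * q" using that ab by simp_all
    ultimately show ?thesis using ab(3) by linarith
  qed
  show "a *\<^sub>R x + b *\<^sub>R y \<in> ?K" using xy cvx unfolding mem_Collect_eq c1 c2 by blast
qed

lemma cell_path_segs:
  assumes D0: "Im (v * cnj u) \<noteq> 0"
    and p: "p \<in> path_image (linepath z0 (z0 + u) +++ linepath (z0 + u) (z0 + u + v) +++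
           linepath (z0 + u + v) (z0 + v) +++ linepath (z0 + v) z0)"
  shows "(cs u v (p - z0) \<in> \<int> \<or> ct u v (p - z0) \<in> \<int>) \<and>
      0 \<le> cs u v (p - z0) \<and> cs u v (p - z0) \<le> 1 \<and> 0 \<le> ct u v (p - z0) \<and> ct u v (p - z0) \<le> 1"
proof -
  have "p \<in> closed_segment z0 (z0 + u) \<or> p \<in> closed_segment (z0 + u) (z0 + u + v) \<or>
        p \<in> closed_segment (z0 + u + v) (z0 + v) \<or> p \<in> closed_segment (z0 + v) z0"
    using p by (simp add: path_image_join)
  then consider
      "\<exists>x\<in>{0..1}. cs u v (p - z0) = (1 - x) * 0 + x * 1 \<and> ct u v (p - z0) = (1 - x) * 0 + x * 0"
    | "\<exists>x\<in>{0..1}. cs u v (p - z0) = (1 - x) * 1 + x * 1 \<and> ct u v (p - z0) = (1 - x) * 0 + x * 1"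
    | "\<exists>x\<in>{0..1}. cs u v (p - z0) = (1 - x) * 1 + x * 0 \<and> ct u v (p - z0) = (1 - x) * 1 + x * 1"
    | "\<exists>x\<in>{0..1}. cs u v (p - z0) = (1 - x) * 0 + x * 0 \<and> ct u v (p - z0) = (1 - x) * 1 + x * 0"
  proof (elim disjE)
    assume "p \<in> closed_segment z0 (z0 + u)"
    thus thesis using that(1) seg_char[OF D0, of p z0 0 0 1 0] by simp
  next
    assume "p \<in> closed_segment (z0 + u) (z0 + u + v)"
    thus thesis using that(2) seg_char[OF D0, of p z0 1 0 1 1] by simp
  next
    assume "p \<in> closed_segment (z0 + u + v) (z0 + v)"
    thus thesis using that(3) seg_char[OF D0, of p z0 1 1 0 1] by simp
  next
    assume "p \<in> closed_segment (z0 + v) z0"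
    thus thesis using that(4) seg_char[OF D0, of p z0 0 1 0 0] by simp
  qed
  thus ?thesis
  proof cases
    case 1
    then obtain x where "x \<in> {0..1}" "cs u v (p - z0) = x" "ct u v (p - z0) = 0" by auto
    thus ?thesis by simp
  next
    case 2
    then obtain x where "x \<in> {0..1}" "cs u v (p - z0) = 1" "ct u v (p - z0) = x" by auto
    thus ?thesis by simp
  next
    case 3
    then obtain x where "x \<in> {0..1}" "cs u v (p - z0) = 1 - x" "ct u v (p - z0) = 1" by auto
    thus ?thesis by simp
  next
    case 4
    then obtain x where "x \<in> {0..1}" "cs u v (p - z0) = 0" "ct u v (p - z0) = 1 - x" by auto
    thus ?thesis by simp
  qed
qed

lemma arg_principle_cell:
  fixes f :: "complex \<Rightarrow> complex"
  assumes D: "Im (v * cnj u) > 0"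
    and mero: "f nicely_meromorphic_on UNIV"
    and per: "\<forall>z. f (z + u) = f z \<and> f (z + v) = f z"
    and nz: "\<forall>\<^sub>\<approx>z. f z \<noteq> 0"
    and bd: "\<forall>p. f p = 0 \<longrightarrow> cs u v (p - z0) \<notin> \<int> \<and> ct u v (p - z0) \<notin> \<int>"
  defines "Q \<equiv> {p. 0 < cs u v (p - z0) \<and> cs u v (p - z0) < 1 \<and> 0 < ct u v (p - z0) \<and> ct u v (p - z0) < 1}"
  shows "finite {p\<in>Q. f p = 0}" "(\<Sum>p\<in>{p\<in>Q. f p = 0}. zorder f p) = 0"
proof -
  have D0: "Im (v * cnj u) \<noteq> 0" using D by simp
  define Kc where "Kc = {p. 0 \<le> cs u v (p - z0) \<and> cs u v (p - z0) \<le> 1 \<and> 0 \<le> ct u v (p - z0) \<and> ct u v (p - z0) \<le> 1}"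
  define R where "R = norm z0 + norm u + norm v + 1"
  define S where "S = ball (0::complex) R"
  define Z where "Z = {x. f x = 0}"
  have Zsp: "Z sparse_in UNIV" using nz unfolding eventually_cosparse Z_def by simp
  have Zcl: "closed Z" using sparse_in_UNIV_imp_closed[OF Zsp] .
  have QK: "Q \<subseteq> Kc" unfolding Q_def Kc_def by auto
  have KS: "Kc \<subseteq> S"
  proof
    fix p assume "p \<in> Kc"
    hence "norm p \<le> norm z0 + norm u + norm v" unfolding Kc_def using Kc_norm[OF D0] by blast
    thus "p \<in> S" unfolding S_def R_def by simp
  qed
  have convK: "convex Kc" unfolding Kc_def by (rule Kc_convex)
  define \<gamma> where "\<gamma> = linepath z0 (z0 + u) +++ linepath (z0 + u) (z0 + u + v) +++
           linepath (z0 + u + v) (z0 + v) +++ linepath (z0 + v) z0"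
  have segs: "cs u v (p - z0) \<in> \<int> \<or> ct u v (p - z0) \<in> \<int>" "p \<in> Kc" if "p \<in> path_image \<gamma>" for p
    using cell_path_segs[OF D0 that[unfolded \<gamma>_def]] unfolding Kc_def by auto
  have pathg: "path \<gamma>" unfolding \<gamma>_def by (simp add: path_join)
  have loopg: "pathfinish \<gamma> = pathstart \<gamma>" unfolding \<gamma>_def by simp
  have imgK: "path_image \<gamma> \<subseteq> Kc" using segs(2) by blast
  have imgZ: "path_image \<gamma> \<inter> Z = {}" using segs(1) bd unfolding Z_def by blast
  define poles where "poles = {z. is_pole f z}"
  have polesZ: "poles \<subseteq> Z"
  proof
    fix x assume "x \<in> poles"
    hence pole: "is_pole f x" unfolding poles_def by simp
    have "(is_pole f x \<and> f x = 0) \<or> f \<midarrow>x\<rightarrow> f x" using mero unfolding nicely_meromorphic_on_def by auto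
    moreover have "\<not> f \<midarrow>x\<rightarrow> f x"
      using pole not_tendsto_and_filterlim_at_infinity[of "at x" f "f x"] unfolding is_pole_def by auto
    ultimately show "x \<in> Z" unfolding Z_def by auto
  qed
  define pz where "pz = {w\<in>S. f w = 0 \<or> w \<in> poles}"
  have pz: "pz = S \<inter> Z" using polesZ unfolding pz_def Z_def by auto
  have finpz: "finite pz"
  proof -
    have "finite (cball 0 R \<inter> Z)"
      by (rule sparse_in_compact_finite[OF sparse_in_subset[OF Zsp]]) auto
    thus ?thesis unfolding pz S_def by (rule finite_subset[rotated]) auto
  qed
  have ana: "f analytic_on {z}" if "z \<notin> Z" for z
  proof -
    have "\<not> is_pole f z" using that polesZ unfolding poles_def by blast
    thus ?thesis by (rule nicely_meromorphic_on_imp_analytic_at[OF mero UNIV_I])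
  qed
  have anaO: "f analytic_on (- Z)" using ana by (intro analytic_on_analytic_at[THEN iffD2]) blast
  have holO: "f holomorphic_on (- Z)" by (rule analytic_imp_holomorphic[OF anaO])
  have openO: "open (- Z)" using Zcl by auto
  define \<phi> where "\<phi> = (\<lambda>x. deriv f x * 1 / f x)"
  have holphi: "\<phi> holomorphic_on (- Z)"
    unfolding \<phi>_def by (intro holomorphic_intros holomorphic_deriv holO openO) (auto simp: Z_def)
  have cint: "\<phi> contour_integrable_on g" if "valid_path g" "path_image g \<subseteq> - Z" for g
    by (rule contour_integrable_holomorphic_simple[OF holphi openO that])
  have AP: "contour_integral \<gamma> \<phi> = 2 * pi * \<i> * (\<Sum>p\<in>pz. winding_number \<gamma> p * 1 * zorder f p)"
    unfolding \<phi>_def pz_def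
  proof (rule argument_principle[where f=f and poles=poles and S=S and h="\<lambda>_. 1" and g=\<gamma>])
    show "open S" "connected S" unfolding S_def by auto
    show "f holomorphic_on S - poles"
    proof (rule analytic_imp_holomorphic)
      show "f analytic_on S - poles"
      proof (rule analytic_on_analytic_at[THEN iffD2], rule ballI)
        fix z assume "z \<in> S - poles"
        hence "\<not> is_pole f z" unfolding poles_def by blast
        thus "f analytic_on {z}" by (rule nicely_meromorphic_on_imp_analytic_at[OF mero UNIV_I])
      qed
    qed
    show "(\<lambda>_. 1) holomorphic_on S" by simp
    show "valid_path \<gamma>" unfolding \<gamma>_def by (simp add: valid_path_join)
    show "pathfinish \<gamma> = pathstart \<gamma>" unfolding \<gamma>_def by simp
    show "path_image \<gamma> \<subseteq> S - {w \<in> S. f w = 0 \<or> w \<in> poles}"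
      using imgK KS imgZ polesZ unfolding Z_def by blast
    show "\<forall>z. z \<notin> S \<longrightarrow> winding_number \<gamma> z = 0"
    proof (intro allI impI)
      fix z assume "z \<notin> S"
      hence "z \<notin> Kc" using KS by auto
      thus "winding_number \<gamma> z = 0"
        using winding_number_zero_outside[OF pathg convK loopg _ imgK] by blast
    qed
    show "finite {w \<in> S. f w = 0 \<or> w \<in> poles}" using finpz unfolding pz_def .
    show "\<forall>p\<in>S \<inter> poles. is_pole f p" unfolding poles_def by auto
  qed
  have perphi: "\<phi> (z + c) = \<phi> z" if "c = u \<or> c = v" for z c
  proof -
    have pc: "\<forall>z. f (z + c) = f z" using per that by auto
    show ?thesis unfolding \<phi>_def using deriv_periodic[OF pc, of z] pc by simp
  qed
  have img: "path_image (linepath a b) \<subseteq> - Z" if "closed_segment a b \<subseteq> path_image \<gamma>" for a b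
    using that imgZ by auto
  have sub: "closed_segment z0 (z0 + u) \<subseteq> path_image \<gamma>"
    "closed_segment (z0 + u) (z0 + u + v) \<subseteq> path_image \<gamma>"
    "closed_segment (z0 + u + v) (z0 + v) \<subseteq> path_image \<gamma>"
    "closed_segment (z0 + v) z0 \<subseteq> path_image \<gamma>"
    unfolding \<gamma>_def by (auto simp: path_image_join)
  have i1: "\<phi> contour_integrable_on linepath z0 (z0 + u)" by (rule cint) (use img[OF sub(1)] in auto)
  have i2: "\<phi> contour_integrable_on linepath (z0 + u) (z0 + u + v)" by (rule cint) (use img[OF sub(2)] in auto)
  have i3: "\<phi> contour_integrable_on linepath (z0 + u + v) (z0 + v)" by (rule cint) (use img[OF sub(3)] in auto)
  have i4: "\<phi> contour_integrable_on linepath (z0 + v) z0" by (rule cint) (use img[OF sub(4)] in auto)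
  have "contour_integral \<gamma> \<phi> = contour_integral (linepath z0 (z0 + u)) \<phi> +
     (contour_integral (linepath (z0 + u) (z0 + u + v)) \<phi> +
     (contour_integral (linepath (z0 + u + v) (z0 + v)) \<phi> + contour_integral (linepath (z0 + v) z0) \<phi>))"
    unfolding \<gamma>_def using i1 i2 i3 i4
    by (simp add: valid_path_join contour_integrable_joinI)
  also have "contour_integral (linepath (z0 + u + v) (z0 + v)) \<phi> = - contour_integral (linepath z0 (z0 + u)) \<phi>"
  proof -
    have "contour_integral (linepath (z0 + u + v) (z0 + v)) \<phi> = - contour_integral (linepath (z0 + v) (z0 + u + v)) \<phi>"
      using contour_integral_reversepath[of "linepath (z0 + v) (z0 + u + v)" \<phi>] by simp
    also have "contour_integral (linepath (z0 + v) (z0 + u + v)) \<phi> = contour_integral (linepath z0 (z0 + u)) (\<lambda>z. \<phi> (z + v))"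
      by (rule contour_integral_linepath_translate)
    also have "(\<lambda>z. \<phi> (z + v)) = \<phi>" using perphi by auto
    finally show ?thesis .
  qed
  also have "contour_integral (linepath (z0 + v) z0) \<phi> = - contour_integral (linepath (z0 + u) (z0 + u + v)) \<phi>"
  proof -
    have r: "contour_integral (linepath (z0 + v) z0) \<phi> = - contour_integral (linepath z0 (z0 + v)) \<phi>"
      using contour_integral_reversepath[of "linepath z0 (z0 + v)" \<phi>] by simp
    have e: "linepath (z0 + u) (z0 + u + v) = linepath (z0 + u) ((z0 + v) + u)" by (simp add: add_ac)
    have t: "contour_integral (linepath (z0 + u) (z0 + u + v)) \<phi> = contour_integral (linepath z0 (z0 + v)) (\<lambda>z. \<phi> (z + u))"
      unfolding e using contour_integral_linepath_translate[of z0 u "z0 + v" \<phi>] by (simp add: add_ac)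
    have "(\<lambda>z. \<phi> (z + u)) = \<phi>" using perphi by auto
    with r t show ?thesis by simp
  qed
  finally have zero: "contour_integral \<gamma> \<phi> = 0" by simp
  have "(\<Sum>p\<in>pz. winding_number \<gamma> p * 1 * zorder f p) = (\<Sum>p\<in>{p\<in>Q. f p = 0}. of_int (zorder f p))"
  proof -
    have sQ: "{p\<in>Q. f p = 0} \<subseteq> pz" using QK KS unfolding pz Z_def by auto
    have "(\<Sum>p\<in>pz. winding_number \<gamma> p * 1 * zorder f p) = (\<Sum>p\<in>{p\<in>Q. f p = 0}. winding_number \<gamma> p * 1 * zorder f p)"
    proof (rule sum.mono_neutral_right[OF finpz sQ])
      show "\<forall>i\<in>pz - {p \<in> Q. f p = 0}. winding_number \<gamma> i * 1 * of_int (zorder f i) = 0"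
      proof
        fix p assume p: "p \<in> pz - {p \<in> Q. f p = 0}"
        hence fp: "f p = 0" "p \<notin> Q" unfolding pz Z_def by auto
        show "winding_number \<gamma> p * 1 * of_int (zorder f p) = 0"
        proof (cases "p \<in> Kc")
          case True
          have n: "cs u v (p - z0) \<noteq> 0" "cs u v (p - z0) \<noteq> 1" "ct u v (p - z0) \<noteq> 0" "ct u v (p - z0) \<noteq> 1"
            using bd fp(1) Ints_0 Ints_1 by metis+
          have False using True fp(2) n unfolding Kc_def Q_def by force
          thus ?thesis ..
        next
          case False
          hence "winding_number \<gamma> p = 0"
            using winding_number_zero_outside[OF pathg convK loopg _ imgK] by blast
          thus ?thesis by simp
        qed
      qed
    qed
    also have "\<dots> = (\<Sum>p\<in>{p\<in>Q. f p = 0}. of_int (zorder f p))"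
      by (intro sum.cong refl) (simp add: wind_cell[OF D] Q_def \<gamma>_def)
    finally show ?thesis .
  qed
  with AP zero have "(\<Sum>p\<in>{p\<in>Q. f p = 0}. (of_int (zorder f p) :: complex)) = 0" by simp
  hence "of_int (\<Sum>p\<in>{p\<in>Q. f p = 0}. zorder f p) = (0::complex)" by simp
  thus "(\<Sum>p\<in>{p\<in>Q. f p = 0}. zorder f p) = 0" by (simp only: of_int_eq_0_iff)
  show "finite {p\<in>Q. f p = 0}"
    by (rule finite_subset[OF _ finpz]) (use QK KS in \<open>auto simp: pz Z_def\<close>)
qed



lemma cs_diff: "cs u v (x - y) = cs u v x - cs u v y" "ct u v (x - y) = ct u v x - ct u v y"
  using cs_linear[of u v 1 x "-1" y] by simp_all

lemma cs_lattice:
  assumes "Im (v * cnj u) \<noteq> 0" "l \<in> lattice u v"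
  shows "cs u v l \<in> \<int>" "ct u v l \<in> \<int>"
proof -
  obtain m n where l: "l = of_int m * u + of_int n * v" using assms(2) unfolding lattice_def by blast
  have "l = of_real (of_int m) * u + of_real (of_int n) * v" unfolding l by simp
  thus "cs u v l \<in> \<int>" "ct u v l \<in> \<int>" using cs_lin[OF assms(1), of "of_int m" "of_int n"] by simp_all
qed

lemma avoid_countable:
  fixes A :: "real set"
  assumes "countable A"
  obtains a where "a \<notin> A"
  using assms uncountable_UNIV_real by (metis UNIV_eq_I)

lemma choose_z0:
  assumes D0: "Im (v * cnj u) \<noteq> 0"
    and Zsp: "Z sparse_in UNIV"
    and Zper: "\<forall>z l. z \<in> Z \<longrightarrow> l \<in> lattice u v \<longrightarrow> z + l \<in> Z"
  obtains z0 where "\<forall>p\<in>Z. cs u v (p - z0) \<notin> \<int> \<and> ct u v (p - z0) \<notin> \<int>"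
proof -
  define F where "F = cell u v \<inter> Z"
  have finF: "finite F" unfolding F_def by (rule sparse_in_compact_finite[OF sparse_in_subset[OF Zsp] compact_cell]) auto
  have cF: "countable (F \<times> (UNIV :: int set))" using finF by (simp add: countable_finite)
  obtain a where a: "a \<notin> (\<lambda>(q,k). cs u v q - of_int k) ` (F \<times> UNIV)"
    using avoid_countable[OF countable_image[OF cF]] by blast
  obtain b where b: "b \<notin> (\<lambda>(q,k). ct u v q - of_int k) ` (F \<times> UNIV)"
    using avoid_countable[OF countable_image[OF cF]] by blast
  define z0 where "z0 = of_real a * u + of_real b * v"
  have "cs u v (p - z0) \<notin> \<int> \<and> ct u v (p - z0) \<notin> \<int>" if p: "p \<in> Z" for p
  proof -
    obtain l s t where lst: "l \<in> lattice u v" "0 \<le> s" "s < 1" "0 \<le> t" "t < 1"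
      "p = l + of_real s * u + of_real t * v" using reduce_cell[OF D0] by metis
    define q where "q = of_real s * u + of_real t * v"
    have qZ: "q \<in> Z" using Zper p lattice_uminus[OF lst(1)] unfolding q_def lst(6)
      by (metis add.assoc add.commute add_diff_cancel_left' diff_add_cancel uminus_add_conv_diff)
    have qc: "q \<in> cell u v" unfolding cell_def q_def using lst by (intro image_eqI[of _ _ "(s,t)"]) auto
    have qF: "q \<in> F" using qZ qc unfolding F_def by auto
    have pq: "p = l + q" unfolding q_def lst(6) by (simp add: add.assoc)
    obtain m where m: "cs u v l = of_int m" using cs_lattice(1)[OF D0 lst(1)] by (auto elim: Ints_cases)
    obtain n where n: "ct u v l = of_int n" using cs_lattice(2)[OF D0 lst(1)] by (auto elim: Ints_cases)
    have csp: "cs u v (p - z0) = of_int m + cs u v q - a"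
      unfolding pq z0_def cs_diff using cs_linear(1)[of u v 1 l 1 q] cs_lin(1)[OF D0, of a b] m by simp
    have ctp: "ct u v (p - z0) = of_int n + ct u v q - b"
      unfolding pq z0_def cs_diff using cs_linear(2)[of u v 1 l 1 q] cs_lin(2)[OF D0, of a b] n by simp
    have c1: "cs u v (p - z0) \<notin> \<int>"
    proof
      assume "cs u v (p - z0) \<in> \<int>"
      then obtain k where k: "cs u v (p - z0) = of_int k" by (auto elim: Ints_cases)
      have ak: "a = cs u v q - of_int (k - m)" using k csp by simp
      have "cs u v q - of_int (k - m) \<in> (\<lambda>(q,k). cs u v q - of_int k) ` (F \<times> UNIV)"
        using qF by (intro image_eqI[of _ _ "(q, k - m)"]) auto
      thus False using a ak by simp
    qed
    have c2: "ct u v (p - z0) \<notin> \<int>"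
    proof
      assume "ct u v (p - z0) \<in> \<int>"
      then obtain k where k: "ct u v (p - z0) = of_int k" by (auto elim: Ints_cases)
      have bk: "b = ct u v q - of_int (k - n)" using k ctp by simp
      have "ct u v q - of_int (k - n) \<in> (\<lambda>(q,k). ct u v q - of_int k) ` (F \<times> UNIV)"
        using qF by (intro image_eqI[of _ _ "(q, k - n)"]) auto
      thus False using b bk by simp
    qed
    show ?thesis using c1 c2 by blast
  qed
  thus ?thesis using that by blast
qed



lemma mero_le:
  assumes "f meromorphic_on UNIV"
  shows "(\<lambda>w. f (z + w)) has_laurent_expansion laurent_expansion f z"
  using assms unfolding meromorphic_on_def' by blast

lemma cosparse_freq:
  fixes f :: "complex \<Rightarrow> complex"
  assumes "\<forall>\<^sub>\<approx>w. f w \<noteq> 0"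
  shows "frequently (\<lambda>w. f w \<noteq> 0) (at z)"
proof -
  have "eventually (\<lambda>w. f w \<noteq> 0) (at z)"
    using eventually_cosparse_imp_eventually_at[OF assms, of z UNIV] by simp
  thus ?thesis by (rule eventually_frequently[rotated]) (rule at_neq_bot)
qed

lemma le_nonzero:
  assumes "f meromorphic_on UNIV" "frequently (\<lambda>w. f w \<noteq> 0) (at z)"
  shows "laurent_expansion f z \<noteq> 0"
  using has_laurent_expansion_frequently_nonzero_iff[OF mero_le[OF assms(1)]] assms(2) by simp

lemma zorder_le:
  assumes "f meromorphic_on UNIV" "frequently (\<lambda>w. f w \<noteq> 0) (at z)"
  shows "zorder f z = fls_subdegree (laurent_expansion f z)"
  by (rule has_laurent_expansion_zorder[OF mero_le[OF assms(1)] le_nonzero[OF assms]])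

lemma pole_iff_zorder:
  assumes "f meromorphic_on UNIV" "frequently (\<lambda>w. f w \<noteq> 0) (at z)"
  shows "is_pole f z \<longleftrightarrow> zorder f z < 0"
  using has_laurent_expansion_imp_is_pole_iff[OF mero_le[OF assms(1)]] zorder_le[OF assms] by simp

lemma zorder_pos_tendsto:
  assumes "f meromorphic_on UNIV" "frequently (\<lambda>w. f w \<noteq> 0) (at z)" "zorder f z > 0"
  shows "f \<midarrow>z\<rightarrow> 0"
proof -
  have s: "fls_subdegree (laurent_expansion f z) > 0" using assms zorder_le by simp
  have "f \<midarrow>z\<rightarrow> fls_nth (laurent_expansion f z) 0"
    by (rule has_laurent_expansion_imp_tendsto[OF mero_le[OF assms(1)]]) (use s in simp)
  moreover have "fls_nth (laurent_expansion f z) 0 = 0" using s by (simp add: fls_eq0_below_subdegree)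
  ultimately show ?thesis by simp
qed

lemma zorder_zero_tendsto_nz:
  assumes "f meromorphic_on UNIV" "frequently (\<lambda>w. f w \<noteq> 0) (at z)" "zorder f z = 0"
  shows "\<exists>c. c \<noteq> 0 \<and> f \<midarrow>z\<rightarrow> c"
proof -
  have s: "fls_subdegree (laurent_expansion f z) = 0" using assms zorder_le by simp
  have "f \<midarrow>z\<rightarrow> fls_nth (laurent_expansion f z) 0"
    by (rule has_laurent_expansion_imp_tendsto[OF mero_le[OF assms(1)]]) (use s in simp)
  moreover have "fls_nth (laurent_expansion f z) 0 \<noteq> 0"
    using nth_fls_subdegree_nonzero[OF le_nonzero[OF assms(1,2)]] s by simp
  ultimately show ?thesis by blast
qed

lemma nicely_analytic:
  assumes "f nicely_meromorphic_on UNIV" "\<not> is_pole f z"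
  shows "f analytic_on {z}"
  by (rule nicely_meromorphic_on_imp_analytic_at[OF assms(1) UNIV_I assms(2)])

lemma nicely_pole_zero:
  assumes "f nicely_meromorphic_on UNIV" "is_pole f z"
  shows "f z = 0"
proof -
  have "(is_pole f z \<and> f z = 0) \<or> f \<midarrow>z\<rightarrow> f z" using assms(1) unfolding nicely_meromorphic_on_def by auto
  moreover have "\<not> f \<midarrow>z\<rightarrow> f z"
    using assms(2) not_tendsto_and_filterlim_at_infinity[of "at z" f "f z"] unfolding is_pole_def by auto
  ultimately show ?thesis by auto
qed

lemma nicely_zero_iff:
  assumes "f nicely_meromorphic_on UNIV" "frequently (\<lambda>w. f w \<noteq> 0) (at z)"
  shows "f z = 0 \<longleftrightarrow> zorder f z \<noteq> 0"
proof (cases "is_pole f z")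
  case True
  have m: "f meromorphic_on UNIV" using assms(1) unfolding nicely_meromorphic_on_def by auto
  show ?thesis using nicely_pole_zero[OF assms(1) True] pole_iff_zorder[OF m assms(2)] True by simp
next
  case False
  have m: "f meromorphic_on UNIV" using assms(1) unfolding nicely_meromorphic_on_def by auto
  have "zorder f z \<ge> 0" using pole_iff_zorder[OF m assms(2)] False by simp
  moreover have "zorder f z > 0 \<longleftrightarrow> f z = 0"
    by (rule zorder_pos_iff'[OF nicely_analytic[OF assms(1) False] assms(2)])
  ultimately show ?thesis by auto
qed

lemma zorder_periodic:
  fixes f :: "complex \<Rightarrow> complex"
  assumes "\<forall>w. f (w + l) = f w"
  shows "zorder f (z + l) = zorder f z"
proof -
  have "zorder f (z + l) = zorder (\<lambda>u. f (u + (z + l))) 0" by (rule zorder_shift)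
  also have "(\<lambda>u. f (u + (z + l))) = (\<lambda>u. f (u + z))"
  proof
    fix u show "f (u + (z + l)) = f (u + z)" using assms[rule_format, of "u + z"] by (simp add: add.assoc)
  qed
  also have "zorder \<dots> 0 = zorder f z" by (rule zorder_shift[symmetric])
  finally show ?thesis .
qed

lemma pole_periodic:
  fixes f :: "complex \<Rightarrow> complex"
  assumes "\<forall>w. f (w + l) = f w"
  shows "is_pole f (z + l) \<longleftrightarrow> is_pole f z"
proof -
  have "is_pole f (z + l) \<longleftrightarrow> is_pole (\<lambda>x. f (z + l + x)) 0" by (rule is_pole_shift_0)
  also have "(\<lambda>x. f (z + l + x)) = (\<lambda>x. f (z + x))"
  proof
    fix x show "f (z + l + x) = f (z + x)" using assms[rule_format, of "z + x"] by (simp add: add_ac)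
  qed
  also have "is_pole \<dots> 0 \<longleftrightarrow> is_pole f z" by (rule is_pole_shift_0[symmetric])
  finally show ?thesis .
qed

lemma zorder_reflect:
  assumes "f meromorphic_on UNIV"
  shows "zorder (\<lambda>w. f (c - w)) z = zorder f (c - z)"
proof -
  define f' where "f' = (\<lambda>y. f (c + y))"
  have m': "f' meromorphic_on {(-1) * z}"
    unfolding f'_def by (rule meromorphic_on_compose[OF assms]) (auto intro!: analytic_intros)
  have "zorder (\<lambda>w. f (c - w)) z = zorder (\<lambda>w. f' ((-1) * w)) z" by (simp add: f'_def)
  also have "\<dots> = zorder f' ((-1) * z)" by (rule zorder_scale[OF m']) simp
  also have "\<dots> = zorder (\<lambda>u. f' (u + (-1) * z)) 0" by (rule zorder_shift)
  also have "(\<lambda>u. f' (u + (-1) * z)) = (\<lambda>u. f (u + (c - z)))" by (simp add: f'_def algebra_simps)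
  also have "zorder \<dots> 0 = zorder f (c - z)" by (rule zorder_shift[symmetric])
  finally show ?thesis .
qed

lemma pole_reflect:
  fixes f :: "complex \<Rightarrow> complex"
  shows "is_pole (\<lambda>w. f (c - w)) z \<longleftrightarrow> is_pole f (c - z)"
proof -
  have "filtermap (\<lambda>w. c - w) (at z) = at (c - z)"
  proof -
    have "filtermap (\<lambda>w. c - w) (at z) = filtermap (\<lambda>x. x - (- c)) (filtermap uminus (at z))"
      by (simp add: filtermap_filtermap)
    also have "filtermap uminus (at z) = at (- z)" by (simp add: filtermap_at_minus)
    also have "filtermap (\<lambda>x. x - (- c)) (at (- z)) = at (- z - (- c))" by (rule filtermap_at_shift)
    finally show ?thesis by simp
  qed
  from is_pole_compose_iff[OF this, of f] show ?thesis by (simp add: o_def)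
qed

lemma elliptic_mero_const:
  assumes D0: "Im (v * cnj u) \<noteq> 0" and m: "f meromorphic_on UNIV"
    and per: "\<forall>z. f (z + u) = f z \<and> f (z + v) = f z"
    and np: "\<forall>z. \<not> is_pole f z"
  obtains C where "\<forall>\<^sub>\<approx>z. f z = C"
proof -
  define G where "G = remove_sings f"
  have lim: "f \<midarrow>z\<rightarrow> G z" for z
  proof -
    have "not_essential f z" by (rule meromorphic_on_not_essential[OF meromorphic_on_subset[OF m]]) simp
    then obtain c where "f \<midarrow>z\<rightarrow> c" using np unfolding not_essential_def by blast
    thus ?thesis unfolding G_def using remove_sings_eqI by metis
  qed
  have anG: "G analytic_on {z}" for z
    unfolding G_def by (rule remove_sings_analytic_at[OF meromorphic_on_isolated_singularity[OF meromorphic_on_subset[OF m]] lim]) auto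
  have holG: "G holomorphic_on UNIV"
    by (rule analytic_imp_holomorphic, rule analytic_on_analytic_at[THEN iffD2]) (use anG in blast)
  have perG: "G (z + c) = G z" if "c = u \<or> c = v" for z c
  proof -
    have pc: "\<forall>w. f (w + c) = f w" using per that by auto
    have "(\<lambda>x. f (x + c)) \<midarrow>(z + c) - c\<rightarrow> G (z + c)" by (rule LIM_offset[OF lim])
    hence "f \<midarrow>z\<rightarrow> G (z + c)" using pc by simp
    thus ?thesis using lim[of z] tendsto_unique[OF at_neq_bot] by blast
  qed
  have "G constant_on UNIV"
    by (rule elliptic_const[OF D0 holG]) (use perG in auto)
  then obtain C where C: "\<And>z. G z = C" unfolding constant_on_def by auto
  have "\<forall>\<^sub>\<approx>z. G z = f z" unfolding G_def by (rule eventually_remove_sings_eq[OF m])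
  hence "\<forall>\<^sub>\<approx>z. f z = C" by eventually_elim (use C in auto)
  thus ?thesis using that by blast
qed


lemma deriv_translate: "deriv (\<lambda>w. f (c + w)) z = deriv f (c + z)"
proof -
  have "deriv (\<lambda>w. f (c + w)) z = deriv ((\<lambda>w. f (c + w)) \<circ> (\<lambda>x. z + x)) 0" by (rule deriv_shift_0)
  also have "(\<lambda>w. f (c + w)) \<circ> (\<lambda>x. z + x) = f \<circ> (\<lambda>x. (c + z) + x)" by (auto simp: add_ac)
  also have "deriv \<dots> 0 = deriv f (c + z)" by (rule deriv_shift_0[symmetric])
  finally show ?thesis .
qed

lemma simple_pole_limit:
  assumes "f meromorphic_on UNIV" "frequently (\<lambda>w. f w \<noteq> 0) (at z)" "zorder f z = -1"
  shows "((\<lambda>w. f w * (w - z)) \<longlongrightarrow> residue f z) (at z)"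
proof -
  define F where "F = laurent_expansion f z"
  have Fe: "(\<lambda>w. f (z + w)) has_laurent_expansion F" unfolding F_def by (rule mero_le[OF assms(1)])
  have F0: "F \<noteq> 0" unfolding F_def by (rule le_nonzero[OF assms(1,2)])
  have sF: "fls_subdegree F = -1" using zorder_le[OF assms(1,2)] assms(3) by (simp add: F_def)
  have "(\<lambda>w. f (z + w) * w powi 1) has_laurent_expansion fls_shift (-1) F"
    by (rule has_laurent_expansion_shift[OF Fe])
  hence e: "(\<lambda>w. (\<lambda>w. f w * (w - z)) (z + w)) has_laurent_expansion fls_shift (-1) F" by simp
  have "((\<lambda>w. f w * (w - z)) \<longlongrightarrow> fls_nth (fls_shift (-1) F) 0) (at z)"
    by (rule has_laurent_expansion_imp_tendsto[OF e]) (use F0 sF in simp)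
  moreover have "residue f z = fls_residue F" by (rule has_laurent_expansion_residue[OF Fe])
  ultimately show ?thesis by simp
qed


lemma no_pole_limit_zero:
  assumes m: "f meromorphic_on UNIV" and lim: "((\<lambda>w. f w * (w - z)) \<longlongrightarrow> 0) (at z)"
  shows "\<not> is_pole f z"
proof
  assume pole: "is_pole f z"
  define F where "F = laurent_expansion f z"
  have Fe: "(\<lambda>w. f (z + w)) has_laurent_expansion F" unfolding F_def by (rule mero_le[OF m])
  have s: "fls_subdegree F < 0" using has_laurent_expansion_imp_is_pole_iff[OF Fe] pole by simp
  have F0: "F \<noteq> 0" using s by auto
  have "(\<lambda>w. f (z + w) * w powi 1) has_laurent_expansion fls_shift (-1) F"
    by (rule has_laurent_expansion_shift[OF Fe])
  hence e: "(\<lambda>w. (\<lambda>w. f w * (w - z)) (z + w)) has_laurent_expansion fls_shift (-1) F" by simp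
  have sQ: "fls_subdegree (fls_shift (-1) F) = fls_subdegree F + 1" using F0 by simp
  show False
  proof (cases "fls_subdegree F + 1 < 0")
    case True
    hence "is_pole (\<lambda>w. f w * (w - z)) z" using has_laurent_expansion_imp_is_pole_iff[OF e] sQ by simp
    thus False using lim not_tendsto_and_filterlim_at_infinity[of "at z" "\<lambda>w. f w * (w - z)" 0]
      unfolding is_pole_def by auto
  next
    case False
    hence s1: "fls_subdegree F = -1" using s by simp
    have "((\<lambda>w. f w * (w - z)) \<longlongrightarrow> fls_nth (fls_shift (-1) F) 0) (at z)"
      by (rule has_laurent_expansion_imp_tendsto[OF e]) (use sQ s1 in simp)
    hence "fls_nth (fls_shift (-1) F) 0 = 0" using lim tendsto_unique[OF at_neq_bot] by blast
    moreover have "fls_nth F (fls_subdegree F) \<noteq> 0" using F0 by simp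
    ultimately show False using s1 by simp
  qed
qed

lemma sparse_UNIV_iff: "A sparse_in UNIV \<longleftrightarrow> (\<forall>y. \<not> y islimpt A)"
  unfolding sparse_in_def by (metis UNIV_I open_UNIV)

lemma cosparse_reflect:
  fixes c :: complex
  assumes "\<forall>\<^sub>\<approx>z. P z"
  shows "\<forall>\<^sub>\<approx>z. P (c - z)"
proof -
  have A: "\<forall>y. \<not> y islimpt {x. \<not> P x}" using assms unfolding eventually_cosparse sparse_UNIV_iff .
  have "\<not> y islimpt {z. \<not> P (c - z)}" for y
  proof
    assume y: "y islimpt {z. \<not> P (c - z)}"
    have "(\<lambda>z. c - z) y islimpt (\<lambda>z. c - z) ` {z. \<not> P (c - z)}"
      by (intro islimpt_isCont_image[OF y] continuous_intros)
         (auto simp: eventually_at_topological)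
    moreover have "(\<lambda>z. c - z) ` {z. \<not> P (c - z)} = {x. \<not> P x}"
      by (auto simp: image_iff intro!: exI[of _ "c - _"])
    ultimately show False using A by auto
  qed
  thus ?thesis unfolding eventually_cosparse sparse_UNIV_iff by auto
qed


lemma filtermap_reflect: "filtermap (\<lambda>w. c - w) (at z) = at (c - (z::complex))"
proof -
  have "filtermap (\<lambda>w. c - w) (at z) = filtermap (\<lambda>x. x - (- c)) (filtermap uminus (at z))"
    by (simp add: filtermap_filtermap)
  also have "filtermap uminus (at z) = at (- z)" by (simp add: filtermap_at_minus)
  also have "filtermap (\<lambda>x. x - (- c)) (at (- z)) = at (- z - (- c))" by (rule filtermap_at_shift)
  finally show ?thesis by simp
qed

lemma tendsto_reflect:
  assumes "(f \<longlongrightarrow> a) (at (c - z))"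
  shows "((\<lambda>w. f (c - w)) \<longlongrightarrow> a) (at (z::complex))"
  using assms tendsto_compose_filtermap[of f "\<lambda>w. c - w" a "at z"] filtermap_reflect[of c z]
  by (simp add: o_def)


lemma analytic_eventually:
  assumes "f analytic_on {z}"
  shows "eventually (\<lambda>w. f analytic_on {w}) (nhds z)"
proof -
  obtain e where e: "e > 0" "f holomorphic_on ball z e" using assms unfolding analytic_on_def by auto
  have "f analytic_on ball z e" using e(2) by (simp add: analytic_on_open)
  hence "\<forall>w\<in>ball z e. f analytic_on {w}" using analytic_on_subset by blast
  thus ?thesis unfolding eventually_nhds using e(1) by (intro exI[of _ "ball z e"]) auto
qed

lemma zorder_one_deriv_nz:
  assumes m: "f meromorphic_on UNIV" and fr: "frequently (\<lambda>w. f w \<noteq> 0) (at z)"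
    and an: "f analytic_on {z}" and z1: "zorder f z = 1"
  shows "deriv f z \<noteq> 0"
proof -
  define F where "F = laurent_expansion f z"
  have Fe: "(\<lambda>w. f (z + w)) has_laurent_expansion F" unfolding F_def by (rule mero_le[OF m])
  have F0: "F \<noteq> 0" unfolding F_def by (rule le_nonzero[OF m fr])
  have s: "fls_subdegree F = 1" using zorder_le[OF m fr] z1 by (simp add: F_def)
  have sd: "fls_subdegree (fls_deriv F) = 0" using fls_subdegree_deriv[of F] s by simp
  have "deriv (\<lambda>w. f (z + w)) = (\<lambda>w. deriv f (z + w))" by (rule ext) (rule deriv_translate)
  hence De: "(\<lambda>w. deriv f (z + w)) has_laurent_expansion fls_deriv F"
    using has_laurent_expansion_deriv[OF Fe] by simp
  have "deriv f \<midarrow>z\<rightarrow> fls_nth (fls_deriv F) 0"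
    by (rule has_laurent_expansion_imp_tendsto[OF De]) (use sd in simp)
  moreover have "deriv f \<midarrow>z\<rightarrow> deriv f z"
  proof -
    have "deriv f analytic_on {z}" using an by (rule analytic_deriv)
    thus ?thesis using analytic_at_imp_isCont isContD by blast
  qed
  ultimately have "deriv f z = fls_nth (fls_deriv F) 0" using tendsto_unique[OF at_neq_bot] by blast
  moreover have "fls_nth (fls_deriv F) 0 = fls_nth F 1" by (simp add: fls_deriv_nth)
  moreover have "fls_nth F 1 \<noteq> 0" using nth_fls_subdegree_nonzero[OF F0] s by simp
  ultimately show ?thesis by simp
qed



lemma comb_two:
  fixes a b :: "complex \<Rightarrow> int"
  assumes fin: "finite A" and a1: "\<forall>p\<in>A. a p \<ge> 1" and sa: "(\<Sum>p\<in>A. a p) = 2"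
    and ab: "\<forall>p\<in>A. b p = a p \<or> b p = - a p" and sb: "(\<Sum>p\<in>A. b p) = 0"
  shows "\<exists>x y. A = {x, y} \<and> x \<noteq> y \<and> a x = 1 \<and> a y = 1 \<and> b y = - b x \<and> (b x = 1 \<or> b x = -1)"
proof -
  have "int (card A) = (\<Sum>p\<in>A. 1)" by simp
  also have "\<dots> \<le> (\<Sum>p\<in>A. a p)" using a1 by (intro sum_mono) auto
  finally have c2: "card A \<le> 2" using sa by simp
  consider "card A = 0" | "card A = 1" | "card A = 2" using c2 by linarith
  thus ?thesis
  proof cases
    case 1
    hence "A = {}" using fin by simp
    thus ?thesis using sa by simp
  next
    case 2
    then obtain x where x: "A = {x}" using card_1_singletonE by blast
    hence "a x = 2" "b x = 0" using sa sb by simp_all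
    thus ?thesis using ab x by auto
  next
    case 3
    then obtain x y where xy: "A = {x, y}" "x \<noteq> y" by (auto simp: card_2_iff)
    have s1: "a x + a y = 2" using sa xy by simp
    have s2: "b x + b y = 0" using sb xy by simp
    have "a x \<ge> 1" "a y \<ge> 1" using a1 xy by simp_all
    hence ax: "a x = 1" "a y = 1" using s1 by linarith+
    have "b x = a x \<or> b x = - a x" using ab xy by simp
    hence "b x = 1 \<or> b x = -1" using ax by simp
    moreover have "b y = - b x" using s2 by linarith
    ultimately have "a x = 1" "a y = 1" "b y = - b x" "b x = 1 \<or> b x = -1" using ax by auto
    thus ?thesis using xy by blast
  qed
qed

locale heli =
  fixes u v E1 E2 :: complex and g h :: "complex \<Rightarrow> complex"
  assumes D: "Im (v * cnj u) > 0"
    and dist: "E1 - E2 \<notin> lattice u v"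
    and g_mero: "g nicely_meromorphic_on UNIV"
    and g_per: "\<forall>z. g (z + u) = g z \<and> g (z + v) = g z"
    and h_mero: "h nicely_meromorphic_on UNIV"
    and h_per: "\<forall>z. h (z + u) = h z \<and> h (z + v) = h z"
    and g_pole: "is_pole g E2"
    and h_E1: "is_pole h E1 \<and> zorder h E1 = -1 \<and> residue h E1 = - \<i>"
    and h_E2: "is_pole h E2 \<and> zorder h E2 = -1 \<and> residue h E2 = \<i>"
    and h_hol: "\<forall>z. (\<forall>l\<in>lattice u v. z \<noteq> E1 + l \<and> z \<noteq> E2 + l) \<longrightarrow> \<not> is_pole h z"
    and gh_hol: "\<forall>z. (\<forall>l\<in>lattice u v. z \<noteq> E1 + l \<and> z \<noteq> E2 + l) \<longrightarrow> \<not> is_pole (\<lambda>w. g w * h w) z"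
    and ginvh_hol: "\<forall>z. (\<forall>l\<in>lattice u v. z \<noteq> E1 + l \<and> z \<noteq> E2 + l) \<longrightarrow> \<not> is_pole (\<lambda>w. h w / g w) z"
    and no_common_zero: "\<forall>z. (\<forall>l\<in>lattice u v. z \<noteq> E1 + l \<and> z \<noteq> E2 + l) \<longrightarrow>
           \<not> (((\<lambda>w. g w * h w) \<midarrow>z\<rightarrow> 0) \<and> ((\<lambda>w. h w / g w) \<midarrow>z\<rightarrow> 0))"
    and helicoid_end: "\<forall>E\<in>{E1, E2}. \<not> is_pole (\<lambda>w. deriv g w / g w - \<i> * h w) E"
begin

abbreviation "L \<equiv> lattice u v"

lemma D0: "Im (v * cnj u) \<noteq> 0" using D by simp

lemma gm: "g meromorphic_on UNIV" using g_mero unfolding nicely_meromorphic_on_def by auto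
lemma hm: "h meromorphic_on UNIV" using h_mero unfolding nicely_meromorphic_on_def by auto

lemma gper: "l \<in> L \<Longrightarrow> g (z + l) = g z" by (rule periodic_lattice[OF g_per])
lemma hper: "l \<in> L \<Longrightarrow> h (z + l) = h z" by (rule periodic_lattice[OF h_per])

lemma g_nz: "\<forall>\<^sub>\<approx>z. g z \<noteq> 0"
proof -
  have "(\<forall>x\<in>UNIV. g x = 0) \<or> (\<forall>\<^sub>\<approx>x\<in>UNIV. g x \<noteq> 0)"
    by (rule nicely_meromorphic_imp_constant_or_avoid[OF g_mero]) auto
  moreover have "\<not> (\<forall>x. g x = 0)"
  proof
    assume "\<forall>x. g x = 0"
    hence "g = (\<lambda>_. 0)" by auto
    thus False using g_pole by simp
  qed
  ultimately show ?thesis by auto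
qed

lemma h_nz: "\<forall>\<^sub>\<approx>z. h z \<noteq> 0"
proof -
  have "(\<forall>x\<in>UNIV. h x = 0) \<or> (\<forall>\<^sub>\<approx>x\<in>UNIV. h x \<noteq> 0)"
    by (rule nicely_meromorphic_imp_constant_or_avoid[OF h_mero]) auto
  moreover have "\<not> (\<forall>x. h x = 0)"
  proof
    assume "\<forall>x. h x = 0"
    hence "h = (\<lambda>_. 0)" by auto
    thus False using h_E1 by simp
  qed
  ultimately show ?thesis by auto
qed

lemma gf: "frequently (\<lambda>w. g w \<noteq> 0) (at z)" by (rule cosparse_freq[OF g_nz])
lemma hf: "frequently (\<lambda>w. h w \<noteq> 0) (at z)" by (rule cosparse_freq[OF h_nz])

lemma zorder_g_end:
  assumes "E \<in> {E1, E2}"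
  shows "zorder g E = (if E = E1 then 1 else -1)"
proof -
  define G where "G = laurent_expansion g E"
  define H where "H = laurent_expansion h E"
  have Ge: "(\<lambda>w. g (E + w)) has_laurent_expansion G" unfolding G_def by (rule mero_le[OF gm])
  have He: "(\<lambda>w. h (E + w)) has_laurent_expansion H" unfolding H_def by (rule mero_le[OF hm])
  have G0: "G \<noteq> 0" unfolding G_def by (rule le_nonzero[OF gm gf])
  have dGe: "(\<lambda>w. deriv g (E + w)) has_laurent_expansion fls_deriv G"
  proof -
    have "deriv (\<lambda>w. g (E + w)) = (\<lambda>w. deriv g (E + w))" by (rule ext) (rule deriv_translate)
    thus ?thesis using has_laurent_expansion_deriv[OF Ge] by simp
  qed
  have "(\<lambda>w. deriv g (E + w) / g (E + w) - \<i> * h (E + w)) has_laurent_expansion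
          fls_deriv G / G - fls_const \<i> * H"
    by (intro laurent_expansion_intros dGe Ge He)
  hence Pe: "(\<lambda>w. (\<lambda>w. deriv g w / g w - \<i> * h w) (E + w)) has_laurent_expansion
          fls_deriv G / G - fls_const \<i> * H" by simp
  have "\<not> fls_subdegree (fls_deriv G / G - fls_const \<i> * H) < 0"
    using has_laurent_expansion_imp_is_pole_iff[OF Pe] helicoid_end assms by auto
  hence "fls_residue (fls_deriv G / G - fls_const \<i> * H) = 0"
    by (intro fls_residue_power_series) simp
  moreover have "fls_residue (fls_deriv G / G) = of_int (fls_subdegree G)"
    using fls_residue_deriv_times_inverse_eq_subdegree(1)[of G] by (simp add: divide_inverse)
  moreover have "residue h E = fls_residue H" by (rule has_laurent_expansion_residue[OF He])
  ultimately have eq: "of_int (fls_subdegree G) = \<i> * residue h E" by simp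
  have zG: "zorder g E = fls_subdegree G" unfolding G_def by (rule zorder_le[OF gm gf])
  show ?thesis
  proof (cases "E = E1")
    case True
    hence "of_int (fls_subdegree G) = (1::complex)" using eq h_E1 by simp
    hence "fls_subdegree G = 1" by (metis of_int_1 of_int_eq_iff)
    thus ?thesis using zG True by simp
  next
    case False
    hence "E = E2" using assms by auto
    hence "of_int (fls_subdegree G) = (-1::complex)" using eq h_E2 by simp
    hence "fls_subdegree G = -1" by (metis of_int_1 of_int_minus of_int_eq_iff)
    thus ?thesis using zG False by simp
  qed
qed

lemma zg1: "zorder g E1 = 1" using zorder_g_end[of E1] by simp
lemma zg2: "zorder g E2 = -1" using zorder_g_end[of E2] dist by (auto simp: lattice_zero)

abbreviation "cc \<equiv> E1 + E2"
abbreviation "k \<equiv> (\<lambda>z. h z - h (cc - z))"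
abbreviation "notP z \<equiv> (\<forall>l\<in>L. z \<noteq> E1 + l \<and> z \<noteq> E2 + l)"

lemma hrm: "(\<lambda>z. h (c - z)) meromorphic_on UNIV"
  by (rule meromorphic_on_compose[OF hm]) (auto intro!: analytic_intros)

lemma km: "k meromorphic_on UNIV"
  by (intro meromorphic_intros hm hrm)

lemma kper: "l \<in> L \<Longrightarrow> k (w + l) = k w"
proof -
  assume l: "l \<in> L"
  have "h (cc - (w + l)) = h ((cc - w) + (- l))" by (simp add: algebra_simps)
  also have "\<dots> = h (cc - w)" by (rule hper[OF lattice_uminus[OF l]])
  finally show ?thesis using hper[OF l, of w] by simp
qed

lemma h_ana: "notP z \<Longrightarrow> h analytic_on {z}"
  using h_hol nicely_analytic[OF h_mero] by blast

lemma k_no_pole_E: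
  assumes "E \<in> {E1, E2}"
  shows "\<not> is_pole k E"
proof (rule no_pole_limit_zero[OF km])
  define E' where "E' = cc - E"
  have E': "E' \<in> {E1, E2}" "cc - E' = E" using assms unfolding E'_def by auto
  have rs: "residue h E + residue h E' = 0" using assms h_E1 h_E2 unfolding E'_def by auto
  have zE: "zorder h X = -1" if "X \<in> {E1, E2}" for X using that h_E1 h_E2 by auto
  have l1: "((\<lambda>w. h w * (w - E)) \<longlongrightarrow> residue h E) (at E)"
    by (rule simple_pole_limit[OF hm hf zE[OF assms]])
  have "((\<lambda>w. h w * (w - E')) \<longlongrightarrow> residue h E') (at (cc - E))"
    using simple_pole_limit[OF hm hf zE[OF E'(1)]] unfolding E'_def .
  hence "((\<lambda>w. h (cc - w) * ((cc - w) - E')) \<longlongrightarrow> residue h E') (at E)"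
    by (rule tendsto_reflect)
  hence l2: "((\<lambda>w. h (cc - w) * ((cc - w) - E')) \<longlongrightarrow> residue h E') (at E)" .
  have "((\<lambda>w. h w * (w - E) + h (cc - w) * ((cc - w) - E')) \<longlongrightarrow> residue h E + residue h E') (at E)"
    by (rule tendsto_add[OF l1 l2])
  moreover have "(\<lambda>w. h w * (w - E) + h (cc - w) * ((cc - w) - E')) = (\<lambda>w. k w * (w - E))"
  proof (rule ext)
    fix w
    have e: "(cc - w) - E' = -(w - E)" by (simp add: E'_def)
    show "h w * (w - E) + h (cc - w) * ((cc - w) - E') = k w * (w - E)"
      unfolding e by (simp add: algebra_simps)
  qed
  ultimately show "((\<lambda>w. k w * (w - E)) \<longlongrightarrow> 0) (at E)" using rs by simp
qed

lemma k_no_pole: "\<not> is_pole k z"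
proof (cases "notP z \<and> notP (cc - z)")
  case True
  have "h analytic_on {z}" using True h_ana by blast
  moreover have "(\<lambda>w. h (cc - w)) analytic_on {z}"
  proof -
    have "h \<circ> (\<lambda>w. cc - w) analytic_on {z}"
      by (rule analytic_on_compose_gen[of _ _ _ "{cc - z}"]) (use True h_ana in \<open>auto intro!: analytic_intros\<close>)
    thus ?thesis by (simp add: o_def)
  qed
  ultimately have "k analytic_on {z}" by (intro analytic_intros)
  thus ?thesis by (rule analytic_at_imp_no_pole)
next
  case False
  then obtain E l where El: "E \<in> {E1, E2}" "l \<in> L" "z = E + l"
  proof -
    assume r: "\<And>E l. E \<in> {E1, E2} \<Longrightarrow> l \<in> L \<Longrightarrow> z = E + l \<Longrightarrow> thesis"
    from False consider l where "l \<in> L" "z = E1 + l \<or> z = E2 + l" | l where "l \<in> L" "cc - z = E1 + l \<or> cc - z = E2 + l"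
      by blast
    thus thesis
    proof cases
      case 1 thus thesis using r by blast
    next
      case 2
      hence "z = E2 + (- l) \<or> z = E1 + (- l)" by (auto simp: algebra_simps)
      thus thesis using r lattice_uminus[OF 2(1)] by blast
    qed
  qed
  have "\<forall>w. k (w + l) = k w" using kper[OF El(2)] by blast
  hence "is_pole k z \<longleftrightarrow> is_pole k E" unfolding El(3) by (rule pole_periodic)
  thus ?thesis using k_no_pole_E[OF El(1)] by simp
qed

lemma h_sym: "\<forall>\<^sub>\<approx>z. h (cc - z) = h z"
proof -
  obtain C where C: "\<forall>\<^sub>\<approx>z. k z = C"
    by (rule elliptic_mero_const[OF D0 km]) (use kper lattice_gen1 lattice_gen2 k_no_pole in auto)
  have C': "\<forall>\<^sub>\<approx>z. k (cc - z) = C" by (rule cosparse_reflect[OF C])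
  have "\<forall>\<^sub>\<approx>z. k z = C \<and> k (cc - z) = C" using C C' by (rule eventually_conj)
  hence "\<forall>\<^sub>\<approx>z. C = 0 \<and> k z = C" by eventually_elim auto
  then obtain z0 where "C = 0 \<and> k z0 = C" using eventually_happens'[of "cosparse UNIV"] by force
  hence "C = 0" by simp
  with C show ?thesis by (auto elim!: eventually_mono)
qed

lemma ghm: "(\<lambda>w. g w * h w) meromorphic_on UNIV" by (intro meromorphic_intros gm hm)
lemma hgm: "(\<lambda>w. h w / g w) meromorphic_on UNIV" by (intro meromorphic_intros gm hm)

lemma gh_nz: "\<forall>\<^sub>\<approx>z. g z * h z \<noteq> 0 \<and> h z / g z \<noteq> 0"
  using g_nz h_nz by eventually_elim auto

lemma ghf: "frequently (\<lambda>w. g w * h w \<noteq> 0) (at z)"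
  by (rule cosparse_freq) (use gh_nz in \<open>auto elim: eventually_mono\<close>)
lemma hgf: "frequently (\<lambda>w. h w / g w \<noteq> 0) (at z)"
  by (rule cosparse_freq) (use gh_nz in \<open>auto elim: eventually_mono\<close>)

lemma gm1: "g meromorphic_on {z}" using gm meromorphic_on_subset by blast
lemma hm1: "h meromorphic_on {z}" using hm meromorphic_on_subset by blast

lemma key_point:
  assumes "notP z"
  shows "zorder h z \<ge> 0 \<and> (zorder g z = zorder h z \<or> zorder g z = - zorder h z)"
proof -
  have h0: "zorder h z \<ge> 0" using pole_iff_zorder[OF hm hf, of z] h_hol assms by auto
  have z1: "zorder (\<lambda>w. g w * h w) z = zorder g z + zorder h z"
    by (rule zorder_mult[OF gm1 gf hm1 hf])
  have z2: "zorder (\<lambda>w. h w / g w) z = zorder h z - zorder g z"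
    by (rule zorder_divide[OF hm1 hf gm1 gf])
  have p1: "zorder (\<lambda>w. g w * h w) z \<ge> 0" using pole_iff_zorder[OF ghm ghf, of z] gh_hol assms by auto
  have p2: "zorder (\<lambda>w. h w / g w) z \<ge> 0" using pole_iff_zorder[OF hgm hgf, of z] ginvh_hol assms by auto
  have "\<not> (zorder (\<lambda>w. g w * h w) z > 0 \<and> zorder (\<lambda>w. h w / g w) z > 0)"
  proof
    assume "zorder (\<lambda>w. g w * h w) z > 0 \<and> zorder (\<lambda>w. h w / g w) z > 0"
    hence "((\<lambda>w. g w * h w) \<midarrow>z\<rightarrow> 0) \<and> ((\<lambda>w. h w / g w) \<midarrow>z\<rightarrow> 0)"
      using zorder_pos_tendsto[OF ghm ghf] zorder_pos_tendsto[OF hgm hgf] by blast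
    thus False using no_common_zero assms by blast
  qed
  thus ?thesis using z1 z2 p1 p2 h0 by linarith
qed

definition "Zs = {z. g z = 0 \<or> h z = 0}"

lemma Zs_sparse: "Zs sparse_in UNIV"
proof -
  have "\<forall>\<^sub>\<approx>z. g z \<noteq> 0 \<and> h z \<noteq> 0" using g_nz h_nz by (rule eventually_conj)
  thus ?thesis unfolding eventually_cosparse Zs_def by simp
qed

lemma Zs_per: "z \<in> Zs \<Longrightarrow> l \<in> L \<Longrightarrow> z + l \<in> Zs"
  unfolding Zs_def using gper hper by auto

definition "z0 = (SOME z0. \<forall>p\<in>Zs. cs u v (p - z0) \<notin> \<int> \<and> ct u v (p - z0) \<notin> \<int>)"

lemma z0_prop: "\<forall>p\<in>Zs. cs u v (p - z0) \<notin> \<int> \<and> ct u v (p - z0) \<notin> \<int>"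
proof -
  obtain a where "\<forall>p\<in>Zs. cs u v (p - a) \<notin> \<int> \<and> ct u v (p - a) \<notin> \<int>"
    by (rule choose_z0[OF D0 Zs_sparse]) (use Zs_per in blast)
  thus ?thesis unfolding z0_def by (rule someI)
qed

definition "Q = {p. 0 < cs u v (p - z0) \<and> cs u v (p - z0) < 1 \<and> 0 < ct u v (p - z0) \<and> ct u v (p - z0) < 1}"

lemma rep_ex: "z \<in> Zs \<Longrightarrow> \<exists>l\<in>L. z + l \<in> Q"
proof -
  assume z: "z \<in> Zs"
  obtain l s t where lst: "l \<in> L" "0 \<le> s" "s < 1" "0 \<le> t" "t < 1"
    "z - z0 = l + of_real s * u + of_real t * v" using reduce_cell[OF D0, of "z - z0"] by metis
  have pZ: "z + (- l) \<in> Zs" by (rule Zs_per[OF z lattice_uminus[OF lst(1)]])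
  have e: "z + (- l) - z0 = of_real s * u + of_real t * v" using lst(6) by (simp add: algebra_simps)
  have cs: "cs u v (z + (- l) - z0) = s" "ct u v (z + (- l) - z0) = t" unfolding e using cs_lin[OF D0] by auto
  have "cs u v (z + (- l) - z0) \<notin> \<int>" "ct u v (z + (- l) - z0) \<notin> \<int>" using z0_prop pZ by auto
  hence "s \<noteq> 0" "t \<noteq> 0" using cs by auto
  hence "z + (- l) \<in> Q" unfolding Q_def using cs lst by auto
  thus ?thesis using lattice_uminus[OF lst(1)] by blast
qed

lemma int_small: "(x::real) \<in> \<int> \<Longrightarrow> -1 < x \<Longrightarrow> x < 1 \<Longrightarrow> x = 0"
  by (auto elim!: Ints_cases)

lemma rep_uniq: "p \<in> Q \<Longrightarrow> q \<in> Q \<Longrightarrow> p - q \<in> L \<Longrightarrow> p = q"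
proof -
  assume p: "p \<in> Q" and q: "q \<in> Q" and pq: "p - q \<in> L"
  have e1: "cs u v (p - q) = cs u v (p - z0) - cs u v (q - z0)"
    using cs_diff(1)[of u v "p - z0" "q - z0"] by simp
  have e2: "ct u v (p - q) = ct u v (p - z0) - ct u v (q - z0)"
    using cs_diff(2)[of u v "p - z0" "q - z0"] by simp
  have "cs u v (p - q) = 0"
    by (rule int_small[OF cs_lattice(1)[OF D0 pq]]) (use p q in \<open>auto simp: Q_def e1\<close>)
  moreover have "ct u v (p - q) = 0"
    by (rule int_small[OF cs_lattice(2)[OF D0 pq]]) (use p q in \<open>auto simp: Q_def e2\<close>)
  ultimately have "p - q = 0" using coord[OF D0, of "p - q"] by simp
  thus ?thesis by simp
qed

definition "rp z = z + (SOME l. l \<in> L \<and> z + l \<in> Q)"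

lemma rp: "z \<in> Zs \<Longrightarrow> rp z \<in> Q \<and> rp z - z \<in> L"
proof -
  assume "z \<in> Zs"
  hence "\<exists>l. l \<in> L \<and> z + l \<in> Q" using rep_ex by blast
  hence "(SOME l. l \<in> L \<and> z + l \<in> Q) \<in> L \<and> z + (SOME l. l \<in> L \<and> z + l \<in> Q) \<in> Q" by (rule someI_ex)
  thus ?thesis unfolding rp_def by simp
qed

lemma zorder_g_cong: "p - z \<in> L \<Longrightarrow> zorder g p = zorder g z"
  using zorder_periodic[of g "p - z" z] gper by simp
lemma zorder_h_cong: "p - z \<in> L \<Longrightarrow> zorder h p = zorder h z"
  using zorder_periodic[of h "p - z" z] hper by simp

lemma hE0: "h E1 = 0" "h E2 = 0" using nicely_pole_zero[OF h_mero] h_E1 h_E2 by auto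
lemma E_Zs: "E1 \<in> Zs" "E2 \<in> Zs" unfolding Zs_def using hE0 by auto

definition "e1 = rp E1"
definition "e2 = rp E2"

lemma e1: "e1 \<in> Q" "e1 - E1 \<in> L" using rp[OF E_Zs(1)] unfolding e1_def by auto
lemma e2: "e2 \<in> Q" "e2 - E2 \<in> L" using rp[OF E_Zs(2)] unfolding e2_def by auto

lemma e12: "e1 \<noteq> e2"
proof
  assume "e1 = e2"
  hence "E1 - E2 = (e2 - E2) - (e1 - E1)" by simp
  hence "E1 - E2 \<in> L" using lattice_diff[OF e2(2) e1(2)] by simp
  thus False using dist by simp
qed

lemma notP_Q: "p \<in> Q \<Longrightarrow> p \<noteq> e1 \<Longrightarrow> p \<noteq> e2 \<Longrightarrow> notP p"
proof -
  assume p: "p \<in> Q" "p \<noteq> e1" "p \<noteq> e2"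
  show "notP p"
  proof (intro ballI conjI notI)
    fix l assume l: "l \<in> L" and pe: "p = E1 + l"
    have "p - e1 = l - (e1 - E1)" using pe by simp
    hence "p - e1 \<in> L" using lattice_diff[OF l e1(2)] by metis
    thus False using rep_uniq[OF p(1) e1(1)] p(2) by simp
  next
    fix l assume l: "l \<in> L" and pe: "p = E2 + l"
    have "p - e2 = l - (e2 - E2)" using pe by simp
    hence "p - e2 \<in> L" using lattice_diff[OF l e2(2)] by metis
    thus False using rep_uniq[OF p(1) e2(1)] p(3) by simp
  qed
qed

lemma zh_e: "zorder h e1 = -1" "zorder h e2 = -1"
  using zorder_h_cong[OF e1(2)] zorder_h_cong[OF e2(2)] h_E1 h_E2 by auto
lemma zg_e: "zorder g e1 = 1" "zorder g e2 = -1"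
  using zorder_g_cong[OF e1(2)] zorder_g_cong[OF e2(2)] zg1 zg2 by auto

lemma sum_g: "finite {p\<in>Q. g p = 0}" "(\<Sum>p\<in>{p\<in>Q. g p = 0}. zorder g p) = 0"
  using arg_principle_cell[OF D g_mero g_per g_nz, of z0] z0_prop unfolding Q_def Zs_def by auto

lemma sum_h: "finite {p\<in>Q. h p = 0}" "(\<Sum>p\<in>{p\<in>Q. h p = 0}. zorder h p) = 0"
  using arg_principle_cell[OF D h_mero h_per h_nz, of z0] z0_prop unfolding Q_def Zs_def by auto

definition "Zh' = {p\<in>Q. h p = 0} - {e1, e2}"

lemma he: "h e1 = 0" "h e2 = 0"
  using hper[OF e1(2), of E1] hper[OF e2(2), of E2] hE0 by (simp_all add: algebra_simps)

lemma gE0: "g E1 = 0" "g E2 = 0"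
  using nicely_zero_iff[OF g_mero gf, of E1] nicely_zero_iff[OF g_mero gf, of E2] zg1 zg2 by auto

lemma ge: "g e1 = 0" "g e2 = 0"
  using gper[OF e1(2), of E1] gper[OF e2(2), of E2] gE0 by (simp_all add: algebra_simps)

lemma finZh: "finite Zh'" unfolding Zh'_def using sum_h(1) by simp

lemma Zh'_notP: "p \<in> Zh' \<Longrightarrow> notP p" unfolding Zh'_def using notP_Q by auto

lemma Zh'_pos: "p \<in> Zh' \<Longrightarrow> zorder h p \<ge> 1"
proof -
  assume p: "p \<in> Zh'"
  have "zorder h p \<ge> 0" using key_point[OF Zh'_notP[OF p]] by simp
  moreover have "zorder h p \<noteq> 0" using p nicely_zero_iff[OF h_mero hf, of p] unfolding Zh'_def by auto
  ultimately show ?thesis by simp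
qed

lemma sum_Zh': "(\<Sum>p\<in>Zh'. zorder h p) = 2"
proof -
  have sub: "{e1, e2} \<subseteq> {p\<in>Q. h p = 0}" using e1 e2 he by auto
  have "(\<Sum>p\<in>{p\<in>Q. h p = 0}. zorder h p) = (\<Sum>p\<in>Zh'. zorder h p) + (\<Sum>p\<in>{e1,e2}. zorder h p)"
    unfolding Zh'_def by (rule sum.subset_diff[OF sub sum_h(1)])
  thus ?thesis using sum_h(2) zh_e e12 by simp
qed

lemma sum_gZh': "(\<Sum>p\<in>Zh'. zorder g p) = 0"
proof -
  define Bg where "Bg = {p\<in>Q. g p = 0}"
  have sub: "{e1, e2} \<subseteq> Bg" using e1 e2 ge unfolding Bg_def by auto
  have finB: "finite Bg" unfolding Bg_def by (rule sum_g(1))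
  have "(\<Sum>p\<in>Bg. zorder g p) = (\<Sum>p\<in>Bg - {e1,e2}. zorder g p) + (\<Sum>p\<in>{e1,e2}. zorder g p)"
    by (rule sum.subset_diff[OF sub finB])
  hence s1: "(\<Sum>p\<in>Bg - {e1,e2}. zorder g p) = 0" using sum_g(2) zg_e e12 unfolding Bg_def by simp
  have sub2: "Bg - {e1,e2} \<subseteq> Zh'"
  proof
    fix p assume p: "p \<in> Bg - {e1,e2}"
    hence nP: "notP p" using notP_Q unfolding Bg_def by auto
    have "zorder g p \<noteq> 0" using p nicely_zero_iff[OF g_mero gf, of p] unfolding Bg_def by auto
    hence "zorder h p \<noteq> 0" using key_point[OF nP] by auto
    hence "h p = 0" using nicely_zero_iff[OF h_mero hf, of p] by auto
    thus "p \<in> Zh'" using p unfolding Bg_def Zh'_def by auto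
  qed
  have "(\<Sum>p\<in>Zh'. zorder g p) = (\<Sum>p\<in>Bg - {e1,e2}. zorder g p)"
  proof (rule sum.mono_neutral_right[OF finZh sub2])
    show "\<forall>p\<in>Zh' - (Bg - {e1, e2}). zorder g p = 0"
    proof
      fix p assume p: "p \<in> Zh' - (Bg - {e1, e2})"
      hence "g p \<noteq> 0" unfolding Zh'_def Bg_def by auto
      thus "zorder g p = 0" using nicely_zero_iff[OF g_mero gf, of p] by auto
    qed
  qed
  thus ?thesis using s1 by simp
qed

lemma Zh'_two: "\<exists>a b. Zh' = {a, b} \<and> a \<noteq> b \<and> zorder h a = 1 \<and> zorder h b = 1 \<and>
    zorder g b = - zorder g a \<and> (zorder g a = 1 \<or> zorder g a = -1)"
proof (rule comb_two[OF finZh _ sum_Zh' _ sum_gZh'])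
  show "\<forall>p\<in>Zh'. 1 \<le> zorder h p" using Zh'_pos by blast
  show "\<forall>p\<in>Zh'. zorder g p = zorder h p \<or> zorder g p = - zorder h p"
  proof
    fix p assume "p \<in> Zh'"
    thus "zorder g p = zorder h p \<or> zorder g p = - zorder h p" using key_point[OF Zh'_notP] by blast
  qed
qed

lemma h_ana_shift:
  assumes "notP x" "l \<in> L"
  shows "h analytic_on {x + l}"
proof -
  have "\<not> is_pole h x" using h_hol assms(1) by blast
  moreover have "\<forall>w. h (w + l) = h w" using hper[OF assms(2)] by blast
  ultimately have "\<not> is_pole h (x + l)" using pole_periodic[of h l x] by simp
  thus ?thesis by (rule nicely_analytic[OF h_mero])
qed

lemma zorder_h_refl: "zorder h (cc - x) = zorder h x"
proof -
  have "zorder h (cc - x) = zorder (\<lambda>w. h (cc - w)) x" by (rule zorder_reflect[OF hm, symmetric])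
  also have "\<dots> = zorder h x"
  proof (rule zorder_cong)
    show "\<forall>\<^sub>F w in at x. h (cc - w) = h w"
      using eventually_cosparse_imp_eventually_at[OF h_sym, of x UNIV] by simp
  qed simp
  finally show ?thesis .
qed

lemma refl_partner:
  assumes x: "x \<in> Zh'" and x1: "zorder h x = 1"
  shows "\<exists>y. y \<in> Zh' \<and> y \<noteq> x \<and> y - (cc - x) \<in> L"
proof -
  have zc: "zorder h (cc - x) = 1" using zorder_h_refl x1 by simp
  hence hc: "h (cc - x) = 0" using nicely_zero_iff[OF h_mero hf, of "cc - x"] by simp
  hence cZ: "cc - x \<in> Zs" unfolding Zs_def by simp
  define y where "y = rp (cc - x)"
  have y: "y \<in> Q" "y - (cc - x) \<in> L" using rp[OF cZ] unfolding y_def by auto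
  have hy: "h y = 0" using hper[OF y(2), of "cc - x"] hc by simp
  have zy: "zorder h y = 1" using zorder_h_cong[OF y(2)] zc by simp
  have "y \<noteq> e1" "y \<noteq> e2" using zy zh_e by auto
  hence yZ: "y \<in> Zh'" unfolding Zh'_def using y(1) hy by auto
  have "y \<noteq> x"
  proof
    assume yx: "y = x"
    define m where "m = x - (cc - x)"
    have m: "m \<in> L" using y(2) yx unfolding m_def by simp
    have cm: "cc - x = x + (- m)" unfolding m_def by simp
    have nP: "notP x" by (rule Zh'_notP[OF x])
    have ax: "h analytic_on {x}" using h_ana[OF nP] .
    have ac: "h analytic_on {cc - x}" unfolding cm by (rule h_ana_shift[OF nP lattice_uminus[OF m]])
    have pm: "\<forall>w. h (w + (- m)) = h w" using hper[OF lattice_uminus[OF m]] by blast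
    have ev: "eventually (\<lambda>w. h (cc - w) = h w) (nhds x)"
    proof -
      have "eventually (\<lambda>w. h (cc - w) = h w) (at x)"
        using eventually_cosparse_imp_eventually_at[OF h_sym, of x UNIV] by simp
      moreover have "h (cc - x) = h x" unfolding cm using pm by simp
      ultimately show ?thesis by (simp add: eventually_nhds_conv_at)
    qed
    have "deriv (\<lambda>w. h (cc - w)) x = deriv h x" by (rule deriv_cong_ev[OF ev refl])
    moreover have "deriv (\<lambda>w. h (cc - w)) x = deriv h (cc - x) * (-1)"
    proof (rule DERIV_imp_deriv, rule DERIV_chain2[of h])
      show "(h has_field_derivative deriv h (cc - x)) (at (cc - x))"
        using analytic_on_imp_differentiable_at[OF ac] DERIV_deriv_iff_field_differentiable by blast
      show "((\<lambda>w. cc - w) has_field_derivative -1) (at x)"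
        by (auto intro!: derivative_eq_intros)
    qed
    moreover have "deriv h (cc - x) = deriv h x" unfolding cm by (rule deriv_periodic[OF pm])
    ultimately have "deriv h x = 0" by simp
    moreover have "deriv h x \<noteq> 0" by (rule zorder_one_deriv_nz[OF hm hf ax x1])
    ultimately show False by simp
  qed
  thus ?thesis using yZ y(2) by blast
qed

lemma gzero_Zh':
  assumes p: "p \<in> Q" "g p = 0" "p \<noteq> e1" "p \<noteq> e2"
  shows "p \<in> Zh'"
proof -
  have nP: "notP p" using notP_Q p by blast
  have "zorder g p \<noteq> 0" using p nicely_zero_iff[OF g_mero gf, of p] by auto
  hence "zorder h p \<noteq> 0" using key_point[OF nP] by auto
  hence "h p = 0" using nicely_zero_iff[OF h_mero hf, of p] by auto
  thus "p \<in> Zh'" using p unfolding Zh'_def by auto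
qed

lemma lat_neg_diff: "a - b \<in> L \<Longrightarrow> b - a \<in> L"
  using lattice_diff_commute by blast

lemma g_pair:
  assumes gz: "g z = 0"
  shows "zorder g z + zorder g (cc - z) = 0"
proof -
  obtain a b where ab: "Zh' = {a, b}" "a \<noteq> b" "zorder h a = 1" "zorder h b = 1"
    "zorder g b = - zorder g a" using Zh'_two by blast
  obtain y where y: "y \<in> Zh'" "y \<noteq> a" "y - (cc - a) \<in> L" using refl_partner[of a] ab by auto
  have pa: "(cc - a) - b \<in> L" using y ab lat_neg_diff by auto
  obtain y' where y': "y' \<in> Zh'" "y' \<noteq> b" "y' - (cc - b) \<in> L" using refl_partner[of b] ab by auto
  have pb: "(cc - b) - a \<in> L" using y' ab lat_neg_diff by auto
  have zZ: "z \<in> Zs" using gz unfolding Zs_def by simp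
  define p where "p = rp z"
  have p: "p \<in> Q" "p - z \<in> L" using rp[OF zZ] unfolding p_def by auto
  have gp: "g p = 0" using gper[OF p(2), of z] gz by simp
  have zp: "zorder g z = zorder g p" using zorder_g_cong[OF p(2)] by simp
  have "(cc - z) - (cc - p) \<in> L" using p(2) by simp
  hence zcp: "zorder g (cc - z) = zorder g (cc - p)" by (rule zorder_g_cong)
  have "zorder g p + zorder g (cc - p) = 0"
  proof -
    consider "p = e1" | "p = e2" | "p = a" | "p = b"
      using gzero_Zh'[OF p(1) gp] ab(1) by blast
    thus ?thesis
    proof cases
      case 1
      have "(cc - e1) - E2 = - (e1 - E1)" by simp
      hence "(cc - e1) - E2 \<in> L" using lattice_uminus[OF e1(2)] by metis
      hence "zorder g (cc - e1) = -1" using zorder_g_cong zg2 by metis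
      thus ?thesis using 1 zg_e by simp
    next
      case 2
      have "(cc - e2) - E1 = - (e2 - E2)" by simp
      hence "(cc - e2) - E1 \<in> L" using lattice_uminus[OF e2(2)] by metis
      hence "zorder g (cc - e2) = 1" using zorder_g_cong zg1 by metis
      thus ?thesis using 2 zg_e by simp
    next
      case 3
      have "zorder g (cc - a) = zorder g b" by (rule zorder_g_cong[OF pa])
      thus ?thesis using 3 ab by simp
    next
      case 4
      have "zorder g (cc - b) = zorder g a" by (rule zorder_g_cong[OF pb])
      thus ?thesis using 4 ab by simp
    qed
  qed
  thus ?thesis using zp zcp by simp
qed

abbreviation "FF \<equiv> (\<lambda>w. g w * g (cc - w))"

lemma grm: "(\<lambda>w. g (c - w)) meromorphic_on UNIV"
  by (rule meromorphic_on_compose[OF gm]) (auto intro!: analytic_intros)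

lemma Fm: "FF meromorphic_on UNIV" by (intro meromorphic_intros gm grm)

lemma gr_nz: "\<forall>\<^sub>\<approx>z. g (cc - z) \<noteq> 0" by (rule cosparse_reflect[OF g_nz])

lemma F_nz: "\<forall>\<^sub>\<approx>z. FF z \<noteq> 0"
  using g_nz gr_nz by eventually_elim simp

lemma Ff: "frequently (\<lambda>w. FF w \<noteq> 0) (at z)" by (rule cosparse_freq[OF F_nz])
lemma grf: "frequently (\<lambda>w. g (cc - w) \<noteq> 0) (at z)" by (rule cosparse_freq[OF gr_nz])

lemma zorder_F: "zorder FF z = 0"
proof -
  have grm1: "(\<lambda>w. g (cc - w)) meromorphic_on {z}" using grm meromorphic_on_subset by blast
  have "zorder FF z = zorder g z + zorder (\<lambda>w. g (cc - w)) z"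
    by (rule zorder_mult[OF gm1 gf grm1 grf])
  also have "zorder (\<lambda>w. g (cc - w)) z = zorder g (cc - z)" by (rule zorder_reflect[OF gm])
  finally have e: "zorder FF z = zorder g z + zorder g (cc - z)" .
  show ?thesis
  proof (cases "g z = 0")
    case True thus ?thesis using e g_pair by simp
  next
    case False
    show ?thesis
    proof (cases "g (cc - z) = 0")
      case True
      hence "zorder g (cc - z) + zorder g (cc - (cc - z)) = 0" by (rule g_pair)
      thus ?thesis using e by simp
    next
      case F2: False
      have "zorder g z = 0" "zorder g (cc - z) = 0"
        using nicely_zero_iff[OF g_mero gf, of z] nicely_zero_iff[OF g_mero gf, of "cc - z"] False F2 by auto
      thus ?thesis using e by simp
    qed
  qed
qed

lemma F_const: "\<exists>C. C \<noteq> 0 \<and> (\<forall>\<^sub>\<approx>z. FF z = C)"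
proof -
  have np: "\<forall>z. \<not> is_pole FF z" using pole_iff_zorder[OF Fm Ff] zorder_F by simp
  have per: "\<forall>z. FF (z + u) = FF z \<and> FF (z + v) = FF z"
  proof
    fix z
    have "g (cc - (z + u)) = g ((cc - z) + (- u))" "g (cc - (z + v)) = g ((cc - z) + (- v))"
      by (simp_all add: algebra_simps)
    thus "FF (z + u) = FF z \<and> FF (z + v) = FF z"
      using gper[OF lattice_uminus[OF lattice_gen1]] gper[OF lattice_uminus[OF lattice_gen2]]
            gper[OF lattice_gen1] gper[OF lattice_gen2] by simp
  qed
  obtain C where C: "\<forall>\<^sub>\<approx>z. FF z = C" by (rule elliptic_mero_const[OF D0 Fm per np])
  have "C \<noteq> 0"
  proof
    assume C0: "C = 0"
    have "\<forall>\<^sub>\<approx>z. FF z = C \<and> FF z \<noteq> 0" by (rule eventually_conj[OF C F_nz])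
    then obtain z where "FF z = C \<and> FF z \<noteq> 0"
      using eventually_happens'[of "cosparse (UNIV::complex set)"] by force
    thus False using C0 by auto
  qed
  thus ?thesis using C by blast
qed

lemma g_sym: "\<forall>\<^sub>\<approx>z. deriv g (cc - z) / g (cc - z) = deriv g z / g z"
proof -
  obtain C where C: "C \<noteq> 0" "\<forall>\<^sub>\<approx>z. FF z = C" using F_const by blast
  have "\<forall>\<^sub>\<approx>z. g z \<noteq> 0 \<and> g (cc - z) \<noteq> 0" using g_nz gr_nz by (rule eventually_conj)
  thus ?thesis
  proof eventually_elim
    case (elim z)
    have ag: "g analytic_on {z}"
      using elim nicely_pole_zero[OF g_mero] nicely_analytic[OF g_mero] by blast
    have agc: "g analytic_on {cc - z}"
      using elim nicely_pole_zero[OF g_mero] nicely_analytic[OF g_mero] by blast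
    have agr: "(\<lambda>w. g (cc - w)) analytic_on {z}"
    proof -
      have "g \<circ> (\<lambda>w. cc - w) analytic_on {z}"
        by (rule analytic_on_compose_gen[of _ _ _ "{cc - z}"]) (use agc in \<open>auto intro!: analytic_intros\<close>)
      thus ?thesis by (simp add: o_def)
    qed
    have aF: "FF analytic_on {z}" using ag agr by (intro analytic_intros)
    have ev: "eventually (\<lambda>w. FF w = C) (nhds z)"
      using analytic_eventually[OF aF]
    proof (rule eventually_mono)
      fix w assume aw: "FF analytic_on {w}"
      have "FF \<midarrow>w\<rightarrow> FF w" using analytic_at_imp_isCont[OF aw] isContD by blast
      moreover have "FF \<midarrow>w\<rightarrow> C"
        using eventually_cosparse_imp_eventually_at[OF C(2), of w UNIV] by (simp add: tendsto_eventually)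
      ultimately show "FF w = C" using tendsto_unique[OF at_neq_bot] by blast
    qed
    have d0: "deriv FF z = 0"
    proof -
      have "deriv FF z = deriv (\<lambda>_. C) z" by (rule deriv_cong_ev[OF ev refl])
      thus ?thesis by simp
    qed
    have dg: "(g has_field_derivative deriv g z) (at z)"
      using analytic_on_imp_differentiable_at[OF ag] DERIV_deriv_iff_field_differentiable by blast
    have dgr: "((\<lambda>w. g (cc - w)) has_field_derivative deriv g (cc - z) * (-1)) (at z)"
    proof (rule DERIV_chain2[of g])
      show "(g has_field_derivative deriv g (cc - z)) (at (cc - z))"
        using analytic_on_imp_differentiable_at[OF agc] DERIV_deriv_iff_field_differentiable by blast
      show "((\<lambda>w. cc - w) has_field_derivative -1) (at z)"
        by (auto intro!: derivative_eq_intros)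
    qed
    have "deriv FF z = deriv g z * g (cc - z) + deriv g (cc - z) * (-1) * g z"
      by (rule DERIV_imp_deriv[OF DERIV_mult[OF dg dgr]])
    hence "deriv g z * g (cc - z) = deriv g (cc - z) * g z" using d0 by simp
    thus ?case using elim by (simp add: field_simps)
  qed
qed

lemma conclusion:
  "\<exists>I. I holomorphic_on UNIV
           \<and> (\<forall>z w. I z - I w \<in> L \<longleftrightarrow> z - w \<in> L)
           \<and> (\<forall>z. I (I z) - z \<in> L)
           \<and> \<not> (\<forall>z. I z - z \<in> L)
           \<and> I E1 - E2 \<in> L
           \<and> (\<forall>\<^sub>\<approx>z. h (I z) * deriv I z = - h z)
           \<and> (\<forall>\<^sub>\<approx>z. deriv g (I z) / g (I z) * deriv I z = - (deriv g z / g z))"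
proof (intro exI[of _ "\<lambda>z. cc - z"] conjI allI)
  have dI: "deriv (\<lambda>z. cc - z) z = -1" for z
    by (rule DERIV_imp_deriv) (auto intro!: derivative_eq_intros)
  show "(\<lambda>z. cc - z) holomorphic_on UNIV" by (intro holomorphic_intros)
  show "(cc - z) - (cc - w) \<in> L \<longleftrightarrow> z - w \<in> L" for z w
    using lattice_diff_commute[of w z u v] by simp
  show "cc - (cc - z) - z \<in> L" for z using lattice_zero by simp
  show "\<not> (\<forall>z. cc - z - z \<in> L)"
  proof
    assume "\<forall>z. cc - z - z \<in> L"
    hence "cc - E2 - E2 \<in> L" by blast
    thus False using dist by simp
  qed
  show "cc - E1 - E2 \<in> L" using lattice_zero by simp
  show "\<forall>\<^sub>\<approx>z. h (cc - z) * deriv (\<lambda>z. cc - z) z = - h z"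
    using h_sym by (rule eventually_mono) (simp add: dI)
  show "\<forall>\<^sub>\<approx>z. deriv g (cc - z) / g (cc - z) * deriv (\<lambda>z. cc - z) z = - (deriv g z / g z)"
    using g_sym by (rule eventually_mono) (simp add: dI)
qed

end


lemma main_gen:
  fixes u v E1 E2 :: complex and g h :: "complex \<Rightarrow> complex"
  assumes D: "Im (v * cnj u) > 0"
    and dist: "E1 - E2 \<notin> lattice u v"
    and g_mero: "g nicely_meromorphic_on UNIV"
    and g_per: "\<forall>z. g (z + u) = g z \<and> g (z + v) = g z"
    and h_mero: "h nicely_meromorphic_on UNIV"
    and h_per: "\<forall>z. h (z + u) = h z \<and> h (z + v) = h z"
    and g_pole: "is_pole g E2"
    and h_E1: "is_pole h E1 \<and> zorder h E1 = -1 \<and> residue h E1 = - \<i>"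
    and h_E2: "is_pole h E2 \<and> zorder h E2 = -1 \<and> residue h E2 = \<i>"
    and h_hol: "\<forall>z. z \<notin> lifted_points u v {E1, E2} \<longrightarrow> \<not> is_pole h z"
    and gh_hol: "\<forall>z. z \<notin> lifted_points u v {E1, E2} \<longrightarrow> \<not> is_pole (\<lambda>w. g w * h w) z"
    and ginvh_hol: "\<forall>z. z \<notin> lifted_points u v {E1, E2} \<longrightarrow> \<not> is_pole (\<lambda>w. h w / g w) z"
    and no_common_zero: "\<forall>z. z \<notin> lifted_points u v {E1, E2} \<longrightarrow>
           \<not> (((\<lambda>w. g w * h w) \<midarrow>z\<rightarrow> 0) \<and> ((\<lambda>w. h w / g w) \<midarrow>z\<rightarrow> 0))"
    and helicoid_end: "\<forall>E\<in>{E1, E2}. \<not> is_pole (\<lambda>w. deriv g w / g w - \<i> * h w) E"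
  shows "\<exists>I. I holomorphic_on UNIV
           \<and> (\<forall>z w. I z - I w \<in> lattice u v \<longleftrightarrow> z - w \<in> lattice u v)
           \<and> (\<forall>z. I (I z) - z \<in> lattice u v)
           \<and> \<not> (\<forall>z. I z - z \<in> lattice u v)
           \<and> I E1 - E2 \<in> lattice u v
           \<and> (\<forall>\<^sub>\<approx>z. h (I z) * deriv I z = - h z)
           \<and> (\<forall>\<^sub>\<approx>z. deriv g (I z) / g (I z) * deriv I z = - (deriv g z / g z))"
proof -
  have nP: "z \<notin> lifted_points u v {E1, E2}" if "\<forall>l\<in>lattice u v. z \<noteq> E1 + l \<and> z \<noteq> E2 + l" for z
    using that unfolding lifted_points_def by auto
  interpret heli u v E1 E2 g h
  proof
    show "\<forall>z. (\<forall>l\<in>lattice u v. z \<noteq> E1 + l \<and> z \<noteq> E2 + l) \<longrightarrow> \<not> is_pole h z"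
      using h_hol nP by blast
    show "\<forall>z. (\<forall>l\<in>lattice u v. z \<noteq> E1 + l \<and> z \<noteq> E2 + l) \<longrightarrow> \<not> is_pole (\<lambda>w. g w * h w) z"
      using gh_hol nP by blast
    show "\<forall>z. (\<forall>l\<in>lattice u v. z \<noteq> E1 + l \<and> z \<noteq> E2 + l) \<longrightarrow> \<not> is_pole (\<lambda>w. h w / g w) z"
      using ginvh_hol nP by blast
    show "\<forall>z. (\<forall>l\<in>lattice u v. z \<noteq> E1 + l \<and> z \<noteq> E2 + l) \<longrightarrow>
           \<not> (((\<lambda>w. g w * h w) \<midarrow>z\<rightarrow> 0) \<and> ((\<lambda>w. h w / g w) \<midarrow>z\<rightarrow> 0))"
      using no_common_zero nP by blast
  qed (use assms in auto)
  show ?thesis by (rule conclusion)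
qed

lemma lifted_swap: "lifted_points w2 w1 E = lifted_points w1 w2 E"
  unfolding lifted_points_def lattice_swap[of w2 w1] ..

theorem lemma3p1:
  fixes w1 w2 E1 E2 :: complex and g h :: "complex \<Rightarrow> complex"
  defines "\<Lambda> \<equiv> lattice w1 w2"
  defines "P \<equiv> lifted_points w1 w2 {E1, E2}"
  assumes gens: "lattice_gens w1 w2"
    and distinct: "E1 - E2 \<notin> \<Lambda>"
    and g_mero: "g nicely_meromorphic_on UNIV"
    and g_per: "\<forall>z. g (z + w1) = g z \<and> g (z + w2) = g z"
    and h_mero: "h nicely_meromorphic_on UNIV"
    and h_per: "\<forall>z. h (z + w1) = h z \<and> h (z + w2) = h z"
    and g_zero: "\<not> is_pole g E1 \<and> g E1 = 0"
    and g_pole: "is_pole g E2"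
    and h_E1: "is_pole h E1 \<and> zorder h E1 = -1 \<and> residue h E1 = - \<i>"
    and h_E2: "is_pole h E2 \<and> zorder h E2 = -1 \<and> residue h E2 = \<i>"
    and h_hol: "\<forall>z. z \<notin> P \<longrightarrow> \<not> is_pole h z"
    and gh_hol: "\<forall>z. z \<notin> P \<longrightarrow> \<not> is_pole (\<lambda>w. g w * h w) z"
    and ginvh_hol: "\<forall>z. z \<notin> P \<longrightarrow> \<not> is_pole (\<lambda>w. h w / g w) z"
    and no_common_zero: "\<forall>z. z \<notin> P \<longrightarrow>
           \<not> (((\<lambda>w. g w * h w) \<midarrow>z\<rightarrow> 0) \<and> ((\<lambda>w. h w / g w) \<midarrow>z\<rightarrow> 0))"
    and hor_period: "\<forall>\<gamma>. torus_closed_curve w1 w2 P \<gamma> \<longrightarrow>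
           contour_integral \<gamma> (\<lambda>w. g w * h w) = cnj (contour_integral \<gamma> (\<lambda>w. h w / g w))"
    and vert_period: "\<forall>\<gamma>. torus_closed_curve w1 w2 P \<gamma> \<longrightarrow>
           (\<exists>k::int. Re (contour_integral \<gamma> h) = 2 * pi * of_int k)"
    and helicoid_end: "\<forall>E\<in>{E1, E2}. \<not> is_pole (\<lambda>w. deriv g w / g w - \<i> * h w) E"
  shows "\<exists>I. I holomorphic_on UNIV
           \<and> (\<forall>z w. I z - I w \<in> \<Lambda> \<longleftrightarrow> z - w \<in> \<Lambda>)
           \<and> (\<forall>z. I (I z) - z \<in> \<Lambda>)
           \<and> \<not> (\<forall>z. I z - z \<in> \<Lambda>)
           \<and> I E1 - E2 \<in> \<Lambda>
           \<and> (\<forall>\<^sub>\<approx>z. h (I z) * deriv I z = - h z)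
           \<and> (\<forall>\<^sub>\<approx>z. deriv g (I z) / g (I z) * deriv I z = - (deriv g z / g z))"
  proof -
  have L: "\<Lambda> = lattice w1 w2" and PP: "P = lifted_points w1 w2 {E1, E2}" by (simp_all add: assms(1,2))
  show ?thesis
  proof (cases "Im (w2 * cnj w1) > 0")
    case True
    show ?thesis unfolding L
      by (rule main_gen[OF True, of E1 E2 g h]) (use assms in \<open>simp_all add: L PP\<close>)
  next
    case False
    hence pos: "Im (w1 * cnj w2) > 0" using gens unfolding lattice_gens_def
      by (simp add: algebra_simps)
    have sw: "lattice w2 w1 = lattice w1 w2" by (rule lattice_swap)
    have "\<exists>I. I holomorphic_on UNIV
           \<and> (\<forall>z w. I z - I w \<in> lattice w2 w1 \<longleftrightarrow> z - w \<in> lattice w2 w1)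
           \<and> (\<forall>z. I (I z) - z \<in> lattice w2 w1)
           \<and> \<not> (\<forall>z. I z - z \<in> lattice w2 w1)
           \<and> I E1 - E2 \<in> lattice w2 w1
           \<and> (\<forall>\<^sub>\<approx>z. h (I z) * deriv I z = - h z)
           \<and> (\<forall>\<^sub>\<approx>z. deriv g (I z) / g (I z) * deriv I z = - (deriv g z / g z))"
      by (rule main_gen[OF pos, of E1 E2 g h]) (use assms in \<open>simp_all add: L PP sw lifted_swap\<close>)
    thus ?thesis unfolding L sw .
  qed
qed

end
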